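(* (Local Lipschitz continuity of the backstepping control kernel operators.) For every $\bar\tau>0$ and every $M>0$ there exist constants $L_K,L_J,L_L>0$ such that for all $\tau_1,\tau_2\in(0,\bar\tau]$, all $\eta_1\in(0,\tau_1)$, $\eta_2\in(0,\tau_2)$, all $f_1,f_2\in C^1(\mathcal T_1)$ and all $c_1,c_2\in\underline C$ with $\|f_i\|_{C^1(\mathcal T_1)}\le M$ and $\|c_i\|_{C^1[0,1]}\le M$ ($i=1,2$): \begin{align*} \|\mathcal K(\tau_1,f_1,c_1)-\mathcal K(\tau_2,f_2,c_2)\|&\le L_K\max\{|\tau_1-\tau_2|,\|f_1-f_2\|,\|c_1-c_2\|\},\\ \|\mathcal L(\tau_1,\eta_1,f_1,c_1)-\mathcal L(\tau_2,\eta_2,f_2,c_2)\|&\le L_L\max\{|\tau_1-\tau_2|,|\eta_1-\eta_2|,\|f_1-f_2\|,\|c_1-c_2\|\},\\ \|\mathcal J(\tau_1,f_1,c_1)-\mathcal J(\tau_2,f_2,c_2)\|&\le L_J\max\{|\tau_1-\tau_2|,\|f_1-f_2\|,\|c_1-c_2\|\}, \end{align*} where on the left the sup norm is over $\mathcal T_1$ for $\mathcal K$ and over $[0,1]$ for $\mathcal L,\mathcal J$ (both vanish on $[1,\infty)$), and on the right $\|\cdot\|$ are sup norms.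
   Context: Notation: $\mathcal T_1=\{(s,q):0\le s\le q\le 1\}$; $\underline C=\{c\in C^1[0,1]:c(1)=0\}$; $\|g\|$ denotes the sup norm of $g$ over its domain. Control kernels: given a delay $\tau>0$, $f\in C^1(\mathcal T_1)$ and $c\in\underline C$, let $K\in C^0(\mathcal T_1)$ be the unique continuous solution of the integral equation $$K(s,q)=-\int_s^{s+1-q}f(\theta,\theta-s+q)\,d\theta+\int_s^{s+1-q}\!\int_\theta^{\theta-s+q}f(r,\theta-s+q)K(\theta,r)\,dr\,d\theta+\mathbf 1_{\{s+\tau<q\}}\Big(-c(s-q+1+\tau)+\int_{s-q+1+\tau}^1c(\theta)K(s-q+1+\tau,\theta)\,d\theta\Big),$$ which is the characteristic form of $K_s+K_q=f(s,q)-\int_s^qK(s,r)f(r,q)\,dr$ on $\mathcal T_1$ with $K(s,1)=\int_{s+\tau}^1K(s+\tau,\theta)c(\theta)d\theta-c(s+\tau)$ if $s+\tau<1$ and $K(s,1)=0$ if $s+\tau\ge1$. Define $J(\sigma)=\int_\sigma^1K(\sigma,q)c(q)\,dq-c(\sigma)$ for $0\le\sigma<1$ and $J(\sigma)=0$ for $\sigma\ge1$; and for $\eta>0$ define $L(\phi)=J(\phi+\eta)$ for $0\le\phi<1$ and $L(\phi)=0$ for $\phi\ge1$. The kernel operators are $\mathcal K(\tau,f,c):=K$, $\mathcal J(\tau,f,c):=J$, $\mathcal L(\tau,\eta,f,c):=L$. *)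

theory Defs
  imports "HOL-Analysis.Analysis"
begin

definition T1 :: "(real \<times> real) set" where
  "T1 = {(s, q). 0 \<le> s \<and> s \<le> q \<and> q \<le> 1}"

definition C1_T1_bounded :: "(real \<times> real \<Rightarrow> real) \<Rightarrow> real \<Rightarrow> bool" where
  "C1_T1_bounded f M \<longleftrightarrow>
     (\<exists>fs fq. continuous_on T1 fs \<and> continuous_on T1 fq \<and>
        (\<forall>x\<in>T1. (f has_derivative (\<lambda>(h, k). fs x * h + fq x * k)) (at x within T1)) \<and>
        (\<forall>x\<in>T1. \<bar>f x\<bar> \<le> M \<and> \<bar>fs x\<bar> \<le> M \<and> \<bar>fq x\<bar> \<le> M))"

definition Cunder_bounded :: "(real \<Rightarrow> real) \<Rightarrow> real \<Rightarrow> bool" where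
  "Cunder_bounded c M \<longleftrightarrow>
     c 1 = 0 \<and>
     (\<exists>c'. continuous_on {0..1} c' \<and>
        (\<forall>x\<in>{0..1}. (c has_real_derivative c' x) (at x within {0..1})) \<and>
        (\<forall>x\<in>{0..1}. \<bar>c x\<bar> \<le> M \<and> \<bar>c' x\<bar> \<le> M))"

definition supn :: "'a set \<Rightarrow> ('a \<Rightarrow> real) \<Rightarrow> real" where
  "supn A g = Sup ((\<lambda>x. \<bar>g x\<bar>) ` A)"

definition Krhs :: "real \<Rightarrow> (real \<times> real \<Rightarrow> real) \<Rightarrow> (real \<Rightarrow> real)
    \<Rightarrow> (real \<times> real \<Rightarrow> real) \<Rightarrow> real \<Rightarrow> real \<Rightarrow> real" where
  "Krhs \<tau> f c K s q =
     - integral {s..s + 1 - q} (\<lambda>\<theta>. f (\<theta>, \<theta> - s + q))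
     + integral {s..s + 1 - q}
         (\<lambda>\<theta>. integral {\<theta>..\<theta> - s + q} (\<lambda>r. f (r, \<theta> - s + q) * K (\<theta>, r)))
     + (if s + \<tau> < q then
          - c (s - q + 1 + \<tau>)
          + integral {s - q + 1 + \<tau>..1} (\<lambda>\<theta>. c \<theta> * K (s - q + 1 + \<tau>, \<theta>))
        else 0)"

definition Kop :: "real \<Rightarrow> (real \<times> real \<Rightarrow> real) \<Rightarrow> (real \<Rightarrow> real) \<Rightarrow> (real \<times> real \<Rightarrow> real)" where
  "Kop \<tau> f c = (THE K. continuous_on T1 K \<and>
       (\<forall>s q. (s, q) \<in> T1 \<longrightarrow> K (s, q) = Krhs \<tau> f c K s q) \<and>
       (\<forall>x. x \<notin> T1 \<longrightarrow> K x = 0))"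

definition Jop :: "real \<Rightarrow> (real \<times> real \<Rightarrow> real) \<Rightarrow> (real \<Rightarrow> real) \<Rightarrow> real \<Rightarrow> real" where
  "Jop \<tau> f c \<sigma> =
     (if \<sigma> < 1 then integral {\<sigma>..1} (\<lambda>q. Kop \<tau> f c (\<sigma>, q) * c q) - c \<sigma> else 0)"

definition Lop :: "real \<Rightarrow> real \<Rightarrow> (real \<times> real \<Rightarrow> real) \<Rightarrow> (real \<Rightarrow> real) \<Rightarrow> real \<Rightarrow> real" where
  "Lop \<tau> \<eta> f c \<phi> = (if \<phi> < 1 then Jop \<tau> f c (\<phi> + \<eta>) else 0)"

end

theory Submission
  imports Defs
begin


lemma int_abs_bound_fallback:
  fixes g h :: "real \<Rightarrow> real"
  assumes "h integrable_on {a..b}" "\<And>x. x \<in> {a..b} \<Longrightarrow> \<bar>g x\<bar> \<le> h x"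
  shows "\<bar>integral {a..b} g\<bar> \<le> integral {a..b} h"
proof (cases "g integrable_on {a..b}")
  case True
  then show ?thesis using integral_norm_bound_integral[OF True assms(1)] assms(2) by auto
next
  case False
  have "0 \<le> integral {a..b} h"
    using assms by (intro integral_nonneg) (auto intro: order_trans[OF abs_ge_zero])
  with False show ?thesis by (simp add: not_integrable_integral)
qed

lemma int_const_bound:
  fixes g :: "real \<Rightarrow> real"
  assumes "a \<le> b" "\<And>x. x \<in> {a..b} \<Longrightarrow> \<bar>g x\<bar> \<le> B"
  shows "\<bar>integral {a..b} g\<bar> \<le> B * (b - a)"
  using int_abs_bound_fallback[of "\<lambda>_. B" a b g] assms by (auto simp: mult.commute)

lemma exp_has_integral:
  fixes l :: real assumes "l > 0" "a \<le> b"
  shows "((\<lambda>r. exp (l * (r - t))) has_integral (exp (l*(b-t)) - exp (l*(a-t))) / l) {a..b}"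
proof -
  have "((\<lambda>r. exp (l * (r - t))) has_integral ((\<lambda>r. exp (l*(r-t))/l) b - (\<lambda>r. exp (l*(r-t))/l) a)) {a..b}"
    apply (rule fundamental_theorem_of_calculus[OF assms(2)])
    using assms(1)
    by (auto intro!: derivative_eq_intros simp: has_real_derivative_iff_has_vector_derivative[symmetric])
  then show ?thesis by (simp add: diff_divide_distrib)
qed

lemma int_exp_bound:
  fixes g :: "real \<Rightarrow> real"
  assumes l: "l > 0" and W: "W \<ge> 0" and A: "A \<ge> 0" and ab: "a \<le> b"
    and g: "\<And>x. x \<in> {a..b} \<Longrightarrow> \<bar>g x\<bar> \<le> A + W * exp (l * (x - t))"
  shows "\<bar>integral {a..b} g\<bar> \<le> A * (b - a) + W * exp (l * (b - t)) / l"
proof -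
  have hi: "((\<lambda>x. A + W * exp (l * (x - t))) has_integral
      (A * (b - a) + W * ((exp (l*(b-t)) - exp (l*(a-t))) / l))) {a..b}"
    using has_integral_add[OF has_integral_const_real[of A a b]
        has_integral_mult_right[OF exp_has_integral[OF l ab, of t], of W]] ab by (simp add: mult.commute)
  have "\<bar>integral {a..b} g\<bar> \<le> integral {a..b} (\<lambda>x. A + W * exp (l * (x - t)))"
    by (rule int_abs_bound_fallback) (use hi g in auto)
  also have "\<dots> = A * (b - a) + W * ((exp (l*(b-t)) - exp (l*(a-t))) / l)"
    using hi by (rule integral_unique)
  also have "\<dots> \<le> A * (b - a) + W * exp (l * (b - t)) / l"
    using W l by (simp add: divide_simps mult_left_mono)
  finally show ?thesis .
qed


lemma T1_iff[simp]: "(s, q) \<in> T1 \<longleftrightarrow> 0 \<le> s \<and> s \<le> q \<and> q \<le> 1"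
  by (simp add: T1_def)

lemma convex_T1: "convex T1"
  unfolding convex_def
proof (intro ballI allI impI)
  fix x y :: "real \<times> real" and u v :: real
  assume xy: "x \<in> T1" "y \<in> T1" and uv: "0 \<le> u" "0 \<le> v" "u + v = 1"
  obtain s q s' q' where e: "x = (s,q)" "y = (s',q')" by (cases x, cases y)
  have h: "0 \<le> s" "s \<le> q" "q \<le> 1" "0 \<le> s'" "s' \<le> q'" "q' \<le> 1"
    using xy e by auto
  have a: "u * s \<le> u * q" "v * s' \<le> v * q'" "u * q \<le> u" "v * q' \<le> v" "0 \<le> u * s" "0 \<le> v * s'"
    using h uv by (auto intro: mult_left_mono simp: mult_left_le)
  show "u *\<^sub>R x + v *\<^sub>R y \<in> T1"
    using a uv e by auto
qed

lemma compact_T1: "compact T1"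
proof -
  have "T1 = {(s,q). 0 \<le> s \<and> s \<le> q \<and> q \<le> 1}" by (simp add: T1_def)
  also have "\<dots> = ({0..1} \<times> {0..1}) \<inter> {x. fst x \<le> snd x}" by auto
  also have "compact \<dots>"
    by (intro compact_Int_closed compact_Times compact_Icc closed_Collect_le continuous_intros)
  finally show ?thesis .
qed

lemma C1_cont: "C1_T1_bounded f M \<Longrightarrow> continuous_on T1 f"
  unfolding C1_T1_bounded_def by (elim exE conjE, rule has_derivative_continuous_on) blast

lemma C1_bound: "C1_T1_bounded f M \<Longrightarrow> x \<in> T1 \<Longrightarrow> \<bar>f x\<bar> \<le> M"
  unfolding C1_T1_bounded_def by auto

lemma normP: "\<bar>h\<bar> \<le> norm (h::real, k::real)" "\<bar>k\<bar> \<le> norm (h, k)"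
  by (simp_all add: norm_Pair real_le_rsqrt)

lemma C1_lip:
  assumes "C1_T1_bounded f M" "(a, y) \<in> T1" "(b, y) \<in> T1"
  shows "\<bar>f (a, y) - f (b, y)\<bar> \<le> 2 * M * \<bar>a - b\<bar>"
proof -
  obtain fs fq where d: "\<forall>x\<in>T1. (f has_derivative (\<lambda>(h, k). fs x * h + fq x * k)) (at x within T1)"
    and bd: "\<forall>x\<in>T1. \<bar>f x\<bar> \<le> M \<and> \<bar>fs x\<bar> \<le> M \<and> \<bar>fq x\<bar> \<le> M"
    using assms(1) unfolding C1_T1_bounded_def by blast
  have "norm (f (a,y) - f (b,y)) \<le> (2*M) * norm ((a,y) - (b,y))"
  proof (rule differentiable_bound[OF convex_T1])
    show "(f has_derivative (\<lambda>(h, k). fs x * h + fq x * k)) (at x within T1)" if "x \<in> T1" for x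
      using d that by blast
    show "onorm (\<lambda>(h, k). fs x * h + fq x * k) \<le> 2 * M" if x: "x \<in> T1" for x
    proof (rule onorm_le)
      fix z :: "real \<times> real"
      obtain h k where z: "z = (h,k)" by (cases z)
      have b1: "\<bar>fs x\<bar> \<le> M" "\<bar>fq x\<bar> \<le> M" using bd x by auto
      have n: "\<bar>h\<bar> \<le> norm z" "\<bar>k\<bar> \<le> norm z"
        using normP z by auto
      have "\<bar>fs x * h + fq x * k\<bar> \<le> \<bar>fs x\<bar> * \<bar>h\<bar> + \<bar>fq x\<bar> * \<bar>k\<bar>"
        by (rule order_trans[OF abs_triangle_ineq]) (simp add: abs_mult)
      also have "\<dots> \<le> M * norm z + M * norm z"
        using b1 n by (intro add_mono mult_mono) auto
      finally show "norm ((\<lambda>(h, k). fs x * h + fq x * k) z) \<le> 2 * M * norm z"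
        using z by simp
    qed
  qed (use assms(2,3) in simp_all)
  then show ?thesis by (simp add: norm_Pair)
qed

lemma Cu_c1: "Cunder_bounded c M \<Longrightarrow> c 1 = 0"
  unfolding Cunder_bounded_def by auto

lemma Cu_bound: "Cunder_bounded c M \<Longrightarrow> x \<in> {0..1} \<Longrightarrow> \<bar>c x\<bar> \<le> M"
  unfolding Cunder_bounded_def by auto

lemma Cu_lip:
  assumes "Cunder_bounded c M" "x \<in> {0..1}" "y \<in> {0..1}"
  shows "\<bar>c x - c y\<bar> \<le> M * \<bar>x - y\<bar>"
proof -
  obtain c' where d: "\<forall>x\<in>{0..1}. (c has_real_derivative c' x) (at x within {0..1})"
    and bd: "\<forall>x\<in>{0..1}. \<bar>c x\<bar> \<le> M \<and> \<bar>c' x\<bar> \<le> M"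
    using assms(1) unfolding Cunder_bounded_def by blast
  have "norm (c x - c y) \<le> M * norm (x - y)"
  proof (rule differentiable_bound[of "{0..1::real}" c "\<lambda>x. (*) (c' x)"])
    show "(c has_derivative (*) (c' x)) (at x within {0..1})" if "x \<in> {0..1}" for x
      using d that by (simp add: has_field_derivative_def)
    show "onorm ((*) (c' x)) \<le> M" if "x \<in> {0..1}" for x
      proof (rule onorm_le)
      fix h show "norm (c' x * h) \<le> M * norm h" using bd that by (simp add: abs_mult mult_right_mono)
    qed
  qed (use assms(2,3) in simp_all)
  then show ?thesis by simp
qed

lemma Cu_cont: "Cunder_bounded c M \<Longrightarrow> continuous_on {0..1} c"
  unfolding Cunder_bounded_def by (elim exE conjE, rule DERIV_continuous_on) blast

lemma integral_scale01:
  fixes g :: "real \<Rightarrow> real"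
  assumes "L \<ge> 0"
  shows "integral {a..a+L} g = L * integral {0..1} (\<lambda>u. g (a + L * u))"
proof (cases "L = 0")
  case True then show ?thesis by simp
next
  case False
  with assms have L: "L > 0" by simp
  have box: "cbox ((a - a) /\<^sub>R L) ((a + L - a) /\<^sub>R L) = {0..1::real}"
    using L by simp
  have iff: "((\<lambda>u. g (L *\<^sub>R u + a)) has_integral (I /\<^sub>R L ^ DIM(real))) {0..1} \<longleftrightarrow>
        (g has_integral I) (cbox a (a + L))" for I
    using has_integral_affinity_iff[OF L, of g a I a "a+L"] box by simp
  show ?thesis
  proof (cases "g integrable_on {a..a+L}")
    case True
    then have "(g has_integral integral {a..a+L} g) (cbox a (a+L))" by (simp add: integrable_integral)
    then have "((\<lambda>u. g (a + L * u)) has_integral (integral {a..a+L} g / L)) {0..1}"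
      using iff by (simp add: add.commute divide_inverse_commute)
    then show ?thesis using L by (simp add: integral_unique)
  next
    case False
    have "\<not> (\<lambda>u. g (a + L * u)) integrable_on {0..1}"
    proof
      assume "(\<lambda>u. g (a + L * u)) integrable_on {0..1}"
      then obtain J where "((\<lambda>u. g (a + L * u)) has_integral J) {0..1}" by auto
      then have "((\<lambda>u. g (L *\<^sub>R u + a)) has_integral ((L * J) /\<^sub>R L ^ DIM(real))) {0..1}"
        using L by (simp add: add.commute field_simps)
      then have "(g has_integral (L*J)) (cbox a (a+L))" using iff by blast
      with False show False by auto
    qed
    with False show ?thesis by (simp add: not_integrable_integral)
  qed
qed

lemma param_cont01:
  fixes \<phi> :: "'a::topological_space \<Rightarrow> real \<Rightarrow> real"
  assumes "continuous_on (U \<times> {0..1}) (\<lambda>(x, u). \<phi> x u)"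
  shows "continuous_on U (\<lambda>x. integral {0..1} (\<phi> x))"
  using integral_continuous_on_param[of U 0 1 \<phi>] assms by simp


definition "Delta = {(t, w). 0 \<le> t \<and> 0 \<le> (w::real) \<and> t + w \<le> 1}"

definition F1 :: "(real \<times> real \<Rightarrow> real) \<Rightarrow> real \<Rightarrow> real \<Rightarrow> real" where
  "F1 f s q = integral {s..s + 1 - q} (\<lambda>\<theta>. f (\<theta>, \<theta> - s + q))"
definition VI :: "(real \<times> real \<Rightarrow> real) \<Rightarrow> (real \<times> real \<Rightarrow> real) \<Rightarrow> real \<Rightarrow> real \<Rightarrow> real \<Rightarrow> real" where
  "VI f K s q \<theta> = integral {\<theta>..\<theta> - s + q} (\<lambda>r. f (r, \<theta> - s + q) * K (\<theta>, r))"
definition V :: "(real \<times> real \<Rightarrow> real) \<Rightarrow> (real \<times> real \<Rightarrow> real) \<Rightarrow> real \<Rightarrow> real \<Rightarrow> real" where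
  "V f K s q = integral {s..s + 1 - q} (VI f K s q)"
definition NI :: "(real \<Rightarrow> real) \<Rightarrow> (real \<times> real \<Rightarrow> real) \<Rightarrow> real \<Rightarrow> real" where
  "NI c K x = integral {x..1} (\<lambda>\<theta>. c \<theta> * K (x, \<theta>))"
definition Gf :: "(real \<times> real \<Rightarrow> real) \<Rightarrow> (real \<times> real \<Rightarrow> real) \<Rightarrow> real \<times> real \<Rightarrow> real" where
  "Gf f K p = integral {fst p..fst p + snd p} (\<lambda>r. f (r, fst p + snd p) * K (fst p, r))"

lemma Krhs_eq: "Krhs \<tau> f c K s q = - F1 f s q + V f K s q +
   (if s + \<tau> < q then - c (s - q + 1 + \<tau>) + NI c K (s - q + 1 + \<tau>) else 0)"
  unfolding Krhs_def F1_def V_def NI_def VI_def[abs_def] by simp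

lemma VI_Gf: "VI f K s q \<theta> = Gf f K (\<theta>, q - s)"
  by (simp add: VI_def Gf_def algebra_simps)

lemma mle: "0 \<le> w \<Longrightarrow> u \<le> 1 \<Longrightarrow> w * u \<le> (w::real)"
  by (simp add: mult_left_le)
lemma mge: "0 \<le> w \<Longrightarrow> 0 \<le> u \<Longrightarrow> 0 \<le> (w::real) * u"
  by simp

lemma lin1: "q \<le> 1 \<Longrightarrow> 0 \<le> u \<Longrightarrow> u \<le> 1 \<Longrightarrow> (1 - q) * u + q \<le> (1::real)"
  "q \<le> 1 \<Longrightarrow> 0 \<le> u \<Longrightarrow> u \<le> 1 \<Longrightarrow> q + (1 - q) * u \<le> (1::real)"
  using mle[of "1 - q" u] by auto

lemma param_cont01':
  fixes \<phi> :: "'a::topological_space \<times> real \<Rightarrow> real"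
  assumes "continuous_on (U \<times> {0..1}) \<phi>"
  shows "continuous_on U (\<lambda>x. integral {0..1} (\<lambda>u. \<phi> (x, u)))"
  using param_cont01[of U "\<lambda>x u. \<phi> (x,u)"] assms by (simp add: case_prod_beta')

lemma Gf_cont:
  assumes f: "continuous_on T1 f" and K: "continuous_on T1 K"
  shows "continuous_on Delta (Gf f K)"
proof -
  have eq: "Gf f K p = snd p * integral {0..1} (\<lambda>u. f (fst p + snd p * u, fst p + snd p) * K (fst p, fst p + snd p * u))"
    if "p \<in> Delta" for p
    using that unfolding Gf_def Delta_def
    by (subst integral_scale01) auto
  have c1: "continuous_on (Delta \<times> {0..1}) (\<lambda>x. f (fst (fst x) + snd (fst x) * snd x, fst (fst x) + snd (fst x)))"
    by (rule continuous_on_compose2[OF f]) (auto intro!: continuous_intros simp: Delta_def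
        intro: mle mge lin1 order_trans[OF add_left_mono[OF mle]])
  have c2: "continuous_on (Delta \<times> {0..1}) (\<lambda>x. K (fst (fst x), fst (fst x) + snd (fst x) * snd x))"
    by (rule continuous_on_compose2[OF K]) (auto intro!: continuous_intros simp: Delta_def
        intro: mle mge lin1 order_trans[OF add_left_mono[OF mle]])
  have "continuous_on Delta (\<lambda>p. snd p * integral {0..1} (\<lambda>u. f (fst p + snd p * u, fst p + snd p) * K (fst p, fst p + snd p * u)))"
    by (intro continuous_intros param_cont01'[where \<phi> = "\<lambda>x. f (fst (fst x) + snd (fst x) * snd x, fst (fst x) + snd (fst x)) * K (fst (fst x), fst (fst x) + snd (fst x) * snd x)", simplified]
        continuous_on_mult c1 c2)
  then show ?thesis by (rule continuous_on_eq) (simp add: eq)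
qed


lemma V_cont:
  assumes f: "continuous_on T1 f" and K: "continuous_on T1 K"
  shows "continuous_on T1 (\<lambda>p. V f K (fst p) (snd p))"
proof -
  have eq: "V f K (fst p) (snd p) = (1 - snd p) * integral {0..1} (\<lambda>u. Gf f K (fst p + (1 - snd p) * u, snd p - fst p))"
    if "p \<in> T1" for p
  proof -
    have "V f K (fst p) (snd p) = integral {fst p..fst p + (1 - snd p)} (\<lambda>\<theta>. Gf f K (\<theta>, snd p - fst p))"
      unfolding V_def VI_Gf by (simp add: algebra_simps)
    also have "\<dots> = (1 - snd p) * integral {0..1} (\<lambda>u. Gf f K (fst p + (1 - snd p) * u, snd p - fst p))"
      using that by (subst integral_scale01) (auto simp: T1_def)
    finally show ?thesis .
  qed
  have c1: "continuous_on (T1 \<times> {0..1}) (\<lambda>x. Gf f K (fst (fst x) + (1 - snd (fst x)) * snd x, snd (fst x) - fst (fst x)))"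
    by (rule continuous_on_compose2[OF Gf_cont[OF f K]]) (auto intro!: continuous_intros simp: Delta_def T1_def
        intro: mle mge lin1 order_trans[OF add_left_mono[OF mle]])
  have "continuous_on T1 (\<lambda>p. (1 - snd p) * integral {0..1} (\<lambda>u. Gf f K (fst p + (1 - snd p) * u, snd p - fst p)))"
    by (intro continuous_intros param_cont01'[where \<phi> = "\<lambda>x. Gf f K (fst (fst x) + (1 - snd (fst x)) * snd x, snd (fst x) - fst (fst x))", simplified] c1)
  then show ?thesis by (rule continuous_on_eq) (simp add: eq)
qed

lemma F1_cont:
  assumes f: "continuous_on T1 f"
  shows "continuous_on T1 (\<lambda>p. F1 f (fst p) (snd p))"
proof -
  have eq: "F1 f (fst p) (snd p) = (1 - snd p) * integral {0..1} (\<lambda>u. f (fst p + (1 - snd p) * u, snd p + (1 - snd p) * u))"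
    if "p \<in> T1" for p
  proof -
    have "F1 f (fst p) (snd p) = integral {fst p..fst p + (1 - snd p)} (\<lambda>\<theta>. f (\<theta>, \<theta> - fst p + snd p))"
      unfolding F1_def by (simp add: algebra_simps)
    also have "\<dots> = (1 - snd p) * integral {0..1} (\<lambda>u. f (fst p + (1 - snd p) * u, snd p + (1 - snd p) * u))"
      using that by (subst integral_scale01) (auto simp: T1_def algebra_simps)
    finally show ?thesis .
  qed
  have c1: "continuous_on (T1 \<times> {0..1}) (\<lambda>x. f (fst (fst x) + (1 - snd (fst x)) * snd x, snd (fst x) + (1 - snd (fst x)) * snd x))"
    by (rule continuous_on_compose2[OF f]) (auto intro!: continuous_intros simp: T1_def
        intro: mle mge lin1 order_trans[OF add_left_mono[OF mle]])
  have "continuous_on T1 (\<lambda>p. (1 - snd p) * integral {0..1} (\<lambda>u. f (fst p + (1 - snd p) * u, snd p + (1 - snd p) * u)))"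
    by (intro continuous_intros param_cont01'[where \<phi> = "\<lambda>x. f (fst (fst x) + (1 - snd (fst x)) * snd x, snd (fst x) + (1 - snd (fst x)) * snd x)", simplified] c1)
  then show ?thesis by (rule continuous_on_eq) (simp add: eq)
qed

lemma NI_cont:
  assumes c: "continuous_on {0..1} c" and K: "continuous_on T1 K"
  shows "continuous_on {0..1} (NI c K)"
proof -
  have eq: "NI c K x = (1 - x) * integral {0..1} (\<lambda>u. c (x + (1 - x) * u) * K (x, x + (1 - x) * u))"
    if "x \<in> {0..1}" for x
  proof -
    have "NI c K x = integral {x..x + (1 - x)} (\<lambda>\<theta>. c \<theta> * K (x, \<theta>))"
      unfolding NI_def by simp
    also have "\<dots> = (1 - x) * integral {0..1} (\<lambda>u. c (x + (1 - x) * u) * K (x, x + (1 - x) * u))"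
      using that by (subst integral_scale01) auto
    finally show ?thesis .
  qed
  have c1: "continuous_on ({0..1} \<times> {0..1}) (\<lambda>x. c (fst x + (1 - fst x) * snd x))"
    by (rule continuous_on_compose2[OF c]) (auto intro!: continuous_intros
        intro: mle mge lin1 order_trans[OF add_left_mono[OF mle]])
  have c2: "continuous_on ({0..1} \<times> {0..1}) (\<lambda>x. K (fst x, fst x + (1 - fst x) * snd x))"
    by (rule continuous_on_compose2[OF K]) (auto intro!: continuous_intros
        intro: mle mge lin1 order_trans[OF add_left_mono[OF mle]])
  have "continuous_on {0..1} (\<lambda>x. (1 - x) * integral {0..1} (\<lambda>u. c (x + (1 - x) * u) * K (x, x + (1 - x) * u)))"
    by (intro continuous_intros param_cont01'[where \<phi> = "\<lambda>x. c (fst x + (1 - fst x) * snd x) * K (fst x, fst x + (1 - fst x) * snd x)", simplified]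
        continuous_on_mult c1 c2)
  then show ?thesis by (rule continuous_on_eq) (simp add: eq)
qed

lemma int_VI:
  fixes f K :: "real \<times> real \<Rightarrow> real" and c :: "real \<Rightarrow> real"
  assumes f: "continuous_on T1 f" and K: "continuous_on T1 K" and sq: "(s, q) \<in> T1"
    and ab: "s \<le> a" "b \<le> s + 1 - q"
  shows "VI f K s q integrable_on {a..b}"
proof -
  have "continuous_on {a..b} (\<lambda>\<theta>. Gf f K (\<theta>, q - s))"
    by (rule continuous_on_compose2[OF Gf_cont[OF f K]]) (use sq ab in \<open>auto intro!: continuous_intros simp: Delta_def\<close>)
  then show ?thesis unfolding VI_Gf by (rule integrable_continuous_interval)
qed

lemma int_inner:
  fixes f K :: "real \<times> real \<Rightarrow> real" and c :: "real \<Rightarrow> real"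
  assumes f: "continuous_on T1 f" and K: "continuous_on T1 K"
    and h: "0 \<le> \<theta>" "\<theta> \<le> a" "b \<le> y" "y \<le> 1"
  shows "(\<lambda>r. f (r, y) * K (\<theta>, r)) integrable_on {a..b}"
proof -
  have "continuous_on {a..b} (\<lambda>r. f (r, y))"
    by (rule continuous_on_compose2[OF f, of _ "\<lambda>r. (r, y)"]) (use h in \<open>auto intro!: continuous_intros\<close>)
  moreover have "continuous_on {a..b} (\<lambda>r. K (\<theta>, r))"
    by (rule continuous_on_compose2[OF K, of _ "\<lambda>r. (\<theta>, r)"]) (use h in \<open>auto intro!: continuous_intros\<close>)
  ultimately have "continuous_on {a..b} (\<lambda>r. f (r, y) * K (\<theta>, r))"
    by (rule continuous_on_mult)
  then show ?thesis by (rule integrable_continuous_interval)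
qed

lemma int_NIi:
  fixes f K :: "real \<times> real \<Rightarrow> real" and c :: "real \<Rightarrow> real"
  assumes c: "continuous_on {0..1} c" and K: "continuous_on T1 K"
    and h: "0 \<le> x" "x \<le> a" "b \<le> 1"
  shows "(\<lambda>\<theta>. c \<theta> * K (x, \<theta>)) integrable_on {a..b}"
proof -
  have "continuous_on {a..b} c"
    by (rule continuous_on_subset[OF c]) (use h in auto)
  moreover have "continuous_on {a..b} (\<lambda>\<theta>. K (x, \<theta>))"
    by (rule continuous_on_compose2[OF K, of _ "\<lambda>\<theta>. (x, \<theta>)"]) (use h in \<open>auto intro!: continuous_intros\<close>)
  ultimately have "continuous_on {a..b} (\<lambda>\<theta>. c \<theta> * K (x, \<theta>))"
    by (rule continuous_on_mult)
  then show ?thesis by (rule integrable_continuous_interval)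
qed

lemma int_F1i:
  fixes f K :: "real \<times> real \<Rightarrow> real" and c :: "real \<Rightarrow> real"
  assumes f: "continuous_on T1 f" and sq: "(s, q) \<in> T1"
  shows "(\<lambda>\<theta>. f (\<theta>, \<theta> - s + q)) integrable_on {s..s + 1 - q}"
proof -
  have "continuous_on {s..s + 1 - q} (\<lambda>\<theta>. f (\<theta>, \<theta> - s + q))"
    by (rule continuous_on_compose2[OF f, of _ "\<lambda>\<theta>. (\<theta>, \<theta> - s + q)"]) (use sq in \<open>auto intro!: continuous_intros\<close>)
  then show ?thesis by (rule integrable_continuous_interval)
qed

definition Nf :: "(real \<Rightarrow> real) \<Rightarrow> (real \<times> real \<Rightarrow> real) \<Rightarrow> real \<Rightarrow> real" where
  "Nf c K x = (if x < 1 then - c x + NI c K x else 0)"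

lemma Nf_cont:
  assumes c: "continuous_on {0..1} c" and c1: "c 1 = 0" and K: "continuous_on T1 K"
  shows "continuous_on {0..} (Nf c K)"
proof -
  have "continuous_on {0..} (\<lambda>x. if x \<le> 1 then - c x + NI c K x else 0)"
  proof (rule continuous_on_cases_le[where h = "\<lambda>x. x"])
    show "continuous_on {x \<in> {0..}. x \<le> 1} (\<lambda>x. - c x + NI c K x)"
      using continuous_on_add[OF continuous_on_minus[OF c] NI_cont[OF c K]]
      by (rule continuous_on_subset) auto
  qed (auto simp: c1 NI_def intro: continuous_intros)
  then show ?thesis
    by (rule continuous_on_eq) (auto simp: Nf_def c1 NI_def)
qed

lemma Krhs_Nf:
  assumes "(s, q) \<in> T1" "\<tau> \<ge> 0" "c 1 = 0"
  shows "Krhs \<tau> f c K s q = - F1 f s q + V f K s q + Nf c K (s - q + 1 + \<tau>)"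
  using assms unfolding Krhs_eq Nf_def by auto

lemma Krhs_cont:
  assumes f: "continuous_on T1 f" and K: "continuous_on T1 K" and c: "continuous_on {0..1} c"
    and c1: "c 1 = 0" and tau: "\<tau> \<ge> 0"
  shows "continuous_on T1 (\<lambda>p. Krhs \<tau> f c K (fst p) (snd p))"
proof -
  have n: "continuous_on T1 (\<lambda>p. Nf c K (fst p - snd p + 1 + \<tau>))"
    by (rule continuous_on_compose2[OF Nf_cont[OF c c1 K]]) (use tau in \<open>auto intro!: continuous_intros\<close>)
  have "continuous_on T1 (\<lambda>p. - F1 f (fst p) (snd p) + V f K (fst p) (snd p) + Nf c K (fst p - snd p + 1 + \<tau>))"
    by (intro continuous_on_add continuous_on_minus F1_cont[OF f] V_cont[OF f K] n)
  then show ?thesis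
    by (rule continuous_on_eq) (auto simp: Krhs_Nf tau c1)
qed


lemma EV:
  fixes \<phi> :: "real \<Rightarrow> real \<Rightarrow> real"
  assumes sq: "(s, q) \<in> T1" and l: "l > 0" and A: "A \<ge> 0" and W: "W \<ge> 0"
    and lo: "\<And>\<theta>. \<theta> \<le> lo \<theta>"
    and b: "\<And>\<theta> r. s \<le> \<theta> \<Longrightarrow> \<theta> \<le> s + 1 - q \<Longrightarrow> lo \<theta> \<le> r \<Longrightarrow> r \<le> \<theta> - s + q \<Longrightarrow>
       \<bar>\<phi> \<theta> r\<bar> \<le> A + W * exp (l * (r - \<theta>))"
  shows "\<bar>integral {s..s + 1 - q} (\<lambda>\<theta>. integral {lo \<theta>..\<theta> - s + q} (\<phi> \<theta>))\<bar>
          \<le> A + W * exp (l * (q - s)) / l"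
proof -
  let ?B = "A + W * exp (l * (q - s)) / l"
  have inner: "\<bar>integral {lo \<theta>..\<theta> - s + q} (\<phi> \<theta>)\<bar> \<le> ?B"
    if th: "\<theta> \<in> {s..s + 1 - q}" for \<theta>
  proof (cases "lo \<theta> \<le> \<theta> - s + q")
    case True
    have "\<bar>integral {lo \<theta>..\<theta> - s + q} (\<phi> \<theta>)\<bar> \<le> A * (\<theta> - s + q - lo \<theta>) + W * exp (l * (\<theta> - s + q - \<theta>)) / l"
      by (rule int_exp_bound[OF l W A True]) (use b th in auto)
    also have "\<dots> \<le> ?B"
    proof -
      have "\<theta> - s + q - lo \<theta> \<le> 1" using lo[of \<theta>] th sq by auto
      then have "A * (\<theta> - s + q - lo \<theta>) \<le> A" using A by (simp add: mult_left_le)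
      then show ?thesis by simp
    qed
    finally show ?thesis .
  next
    case False
    then show ?thesis using A W l by simp
  qed
  have "\<bar>integral {s..s + 1 - q} (\<lambda>\<theta>. integral {lo \<theta>..\<theta> - s + q} (\<phi> \<theta>))\<bar> \<le> ?B * (s + 1 - q - s)"
    by (rule int_const_bound) (use sq inner in auto)
  also have "\<dots> \<le> ?B"
    using sq A W l by (simp add: mult_left_le)
  finally show ?thesis .
qed

lemma EN:
  fixes \<psi> :: "real \<Rightarrow> real"
  assumes l: "l > 0" and W: "W \<ge> 0" and x: "x \<le> lo" and lo1: "lo \<le> 1"
    and b: "\<And>\<theta>. lo \<le> \<theta> \<Longrightarrow> \<theta> \<le> 1 \<Longrightarrow> \<bar>\<psi> \<theta>\<bar> \<le> A + W * exp (l * (\<theta> - x))" and A: "A \<ge> 0"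
  shows "\<bar>integral {lo..1} \<psi>\<bar> \<le> A * (1 - lo) + W * exp (l * (1 - x)) / l"
  by (rule int_exp_bound[OF l W A lo1]) (use b in auto)

lemma half_pow_lim:
  fixes y C :: real
  assumes "\<And>n. y \<le> a + C * (1/2) ^ n"
  shows "y \<le> a"
proof -
  have "(\<lambda>n. a + C * (1/2::real) ^ n) \<longlonglongrightarrow> a + C * 0"
    by (intro tendsto_intros) simp
  then show ?thesis using assms by (intro LIMSEQ_le_const[where X = "\<lambda>n. a + C * (1/2::real) ^ n"]) auto
qed

lemma weighted:
  fixes D :: "real \<times> real \<Rightarrow> real"
  assumes l: "l \<ge> 0" and a: "a \<ge> 0" and Asub: "\<And>x. x \<in> A \<Longrightarrow> fst x \<le> snd x"
    and B: "\<And>x. x \<in> A \<Longrightarrow> \<bar>D x\<bar> \<le> B"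
    and step: "\<And>W. W \<ge> 0 \<Longrightarrow> (\<forall>x\<in>A. \<bar>D x\<bar> \<le> W * exp (l * (snd x - fst x))) \<Longrightarrow>
                   (\<forall>x\<in>A. \<bar>D x\<bar> \<le> (a + W / 2) * exp (l * (snd x - fst x)))"
  shows "\<And>x. x \<in> A \<Longrightarrow> \<bar>D x\<bar> \<le> 2 * a * exp (l * (snd x - fst x))"
proof -
  define B' where "B' = max B 0"
  have e1: "1 \<le> exp (l * (snd x - fst x))" if "x \<in> A" for x
    using Asub[OF that] l by simp
  have ind: "\<forall>x\<in>A. \<bar>D x\<bar> \<le> (2 * a + B' * (1/2) ^ n) * exp (l * (snd x - fst x))" for n
  proof (induction n)
    case 0
    show ?case
    proof
      fix x assume x: "x \<in> A"
      have "\<bar>D x\<bar> \<le> B'" using B[OF x] by (simp add: B'_def)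
      also have "\<dots> \<le> (2 * a + B') * 1" using a by simp
      also have "\<dots> \<le> (2 * a + B') * exp (l * (snd x - fst x))"
        using e1[OF x] a by (intro mult_left_mono) (auto simp: B'_def)
      finally show "\<bar>D x\<bar> \<le> (2 * a + B' * (1 / 2) ^ 0) * exp (l * (snd x - fst x))" by simp
    qed
  next
    case (Suc n)
    have "\<forall>x\<in>A. \<bar>D x\<bar> \<le> (a + (2 * a + B' * (1/2) ^ n) / 2) * exp (l * (snd x - fst x))"
      by (rule step) (use Suc a in \<open>auto simp: B'_def\<close>)
    then show ?case by (simp add: field_simps)
  qed
  fix x assume x: "x \<in> A"
  have "\<bar>D x\<bar> / exp (l * (snd x - fst x)) \<le> 2 * a"
  proof (rule half_pow_lim[where C = B'])
    fix n
    show "\<bar>D x\<bar> / exp (l * (snd x - fst x)) \<le> 2 * a + B' * (1/2) ^ n"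
      using ind[of n] x by (simp add: divide_le_eq)
  qed
  then show "\<bar>D x\<bar> \<le> 2 * a * exp (l * (snd x - fst x))"
    by (simp add: divide_le_eq)
qed

lemma V_diff:
  fixes f1 f2 K1 K2 :: "real \<times> real \<Rightarrow> real"
  assumes "continuous_on T1 f1" "continuous_on T1 f2" "continuous_on T1 K1" "continuous_on T1 K2"
    and sq: "(s, q) \<in> T1"
  shows "V f1 K1 s q - V f2 K2 s q = integral {s..s + 1 - q} (\<lambda>\<theta>. integral {\<theta>..\<theta> - s + q}
            (\<lambda>r. f1 (r, \<theta> - s + q) * K1 (\<theta>, r) - f2 (r, \<theta> - s + q) * K2 (\<theta>, r)))"
proof -
  have "V f1 K1 s q - V f2 K2 s q = integral {s..s + 1 - q} (\<lambda>\<theta>. VI f1 K1 s q \<theta> - VI f2 K2 s q \<theta>)"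
    unfolding V_def using assms by (intro integral_diff[symmetric] int_VI) auto
  also have "\<dots> = integral {s..s + 1 - q} (\<lambda>\<theta>. integral {\<theta>..\<theta> - s + q}
            (\<lambda>r. f1 (r, \<theta> - s + q) * K1 (\<theta>, r) - f2 (r, \<theta> - s + q) * K2 (\<theta>, r)))"
  proof (rule integral_cong)
    fix \<theta> assume th: "\<theta> \<in> {s..s + 1 - q}"
    show "VI f1 K1 s q \<theta> - VI f2 K2 s q \<theta> = integral {\<theta>..\<theta> - s + q}
            (\<lambda>r. f1 (r, \<theta> - s + q) * K1 (\<theta>, r) - f2 (r, \<theta> - s + q) * K2 (\<theta>, r))"
      unfolding VI_def using assms th by (intro integral_diff[symmetric] int_inner) auto
  qed
  finally show ?thesis .
qed

lemma NI_diff: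
  fixes K1 K2 :: "real \<times> real \<Rightarrow> real" and c1 c2 :: "real \<Rightarrow> real"
  assumes "continuous_on {0..1} c1" "continuous_on {0..1} c2" "continuous_on T1 K1" "continuous_on T1 K2"
    and x: "0 \<le> x"
  shows "NI c1 K1 x - NI c2 K2 x = integral {x..1} (\<lambda>\<theta>. c1 \<theta> * K1 (x, \<theta>) - c2 \<theta> * K2 (x, \<theta>))"
  unfolding NI_def using assms by (intro integral_diff[symmetric] int_NIi) auto

lemma F1_diff:
  fixes f1 f2 :: "real \<times> real \<Rightarrow> real"
  assumes "continuous_on T1 f1" "continuous_on T1 f2" and sq: "(s, q) \<in> T1"
  shows "F1 f1 s q - F1 f2 s q = integral {s..s + 1 - q} (\<lambda>\<theta>. f1 (\<theta>, \<theta> - s + q) - f2 (\<theta>, \<theta> - s + q))"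
  unfolding F1_def using assms by (intro integral_diff[symmetric] int_F1i) auto


definition good :: "real \<Rightarrow> (real \<times> real \<Rightarrow> real) \<Rightarrow> (real \<Rightarrow> real) \<Rightarrow> bool" where
  "good M f c \<longleftrightarrow> M > 0 \<and> continuous_on T1 f \<and> (\<forall>x\<in>T1. \<bar>f x\<bar> \<le> M) \<and>
     continuous_on {0..1} c \<and> (\<forall>x\<in>{0..1}. \<bar>c x\<bar> \<le> M) \<and> c 1 = 0"

lemma good_intro: "C1_T1_bounded f M \<Longrightarrow> Cunder_bounded c M \<Longrightarrow> M > 0 \<Longrightarrow> good M f c"
  unfolding good_def using C1_cont C1_bound Cu_cont Cu_bound Cu_c1 by blast

lemma goodD:
  assumes "good M f c"
  shows "M > 0" "continuous_on T1 f" "\<And>x. x \<in> T1 \<Longrightarrow> \<bar>f x\<bar> \<le> M" "continuous_on {0..1} c"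
    "\<And>x. 0 \<le> x \<Longrightarrow> x \<le> 1 \<Longrightarrow> \<bar>c x\<bar> \<le> M" "c 1 = 0"
  using assms unfolding good_def by auto

lemma abs_mult_le: "\<bar>a\<bar> \<le> M \<Longrightarrow> \<bar>b\<bar> \<le> W \<Longrightarrow> \<bar>a * (b::real)\<bar> \<le> M * W"
  by (simp add: abs_mult mult_mono')

lemma CS:
  fixes K1 K2 :: "real \<times> real \<Rightarrow> real"
  assumes g: "good M f c" and tau: "\<tau> \<ge> 0" and K1: "continuous_on T1 K1" and K2: "continuous_on T1 K2"
    and W: "W \<ge> 0" and D: "\<forall>x\<in>T1. \<bar>K1 x - K2 x\<bar> \<le> W * exp (4 * M * (snd x - fst x))"
    and sq: "(s, q) \<in> T1"
  shows "\<bar>Krhs \<tau> f c K1 s q - Krhs \<tau> f c K2 s q\<bar> \<le> W / 2 * exp (4 * M * (q - s))"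
proof -
  note gd = goodD[OF g]
  have l: "4 * M > 0" using gd by simp
  have "\<bar>V f K1 s q - V f K2 s q\<bar> \<le> 0 + (M * W) * exp (4 * M * (q - s)) / (4 * M)"
    unfolding V_diff[OF gd(2) gd(2) K1 K2 sq]
  proof (rule EV[OF sq l _ _ order_refl])
    fix \<theta> r assume h: "s \<le> \<theta>" "\<theta> \<le> s + 1 - q" "\<theta> \<le> r" "r \<le> \<theta> - s + q"
    have "\<bar>f (r, \<theta> - s + q) * K1 (\<theta>, r) - f (r, \<theta> - s + q) * K2 (\<theta>, r)\<bar>
        = \<bar>f (r, \<theta> - s + q) * (K1 (\<theta>, r) - K2 (\<theta>, r))\<bar>" by (simp add: algebra_simps)
    also have "\<dots> \<le> M * (W * exp (4 * M * (r - \<theta>)))"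
      by (rule abs_mult_le) (use gd(3) D h sq in \<open>auto simp: T1_def\<close>)
    finally show "\<bar>f (r, \<theta> - s + q) * K1 (\<theta>, r) - f (r, \<theta> - s + q) * K2 (\<theta>, r)\<bar>
        \<le> 0 + M * W * exp (4 * M * (r - \<theta>))" by simp
  qed (use gd W in auto)
  then have v: "\<bar>V f K1 s q - V f K2 s q\<bar> \<le> W / 4 * exp (4 * M * (q - s))"
    using gd by simp
  have n: "\<bar>NI c K1 x - NI c K2 x\<bar> \<le> W / 4 * exp (4 * M * (q - s))"
    if x: "x = s - q + 1 + \<tau>" "s + \<tau> < q" for x
  proof -
    have x0: "0 \<le> x" "x < 1" using x sq tau by auto
    have "\<bar>NI c K1 x - NI c K2 x\<bar> \<le> 0 * (1 - x) + (M * W) * exp (4 * M * (1 - x)) / (4 * M)"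
      unfolding NI_diff[OF gd(4) gd(4) K1 K2 x0(1)]
    proof (rule EN[OF l _ order_refl])
      fix \<theta> assume h: "x \<le> \<theta>" "\<theta> \<le> 1"
      have "\<bar>c \<theta> * K1 (x, \<theta>) - c \<theta> * K2 (x, \<theta>)\<bar> = \<bar>c \<theta> * (K1 (x, \<theta>) - K2 (x, \<theta>))\<bar>"
        by (simp add: algebra_simps)
      also have "\<dots> \<le> M * (W * exp (4 * M * (\<theta> - x)))"
        by (rule abs_mult_le) (use gd(5) D h x0 in \<open>auto simp: T1_def\<close>)
      finally show "\<bar>c \<theta> * K1 (x, \<theta>) - c \<theta> * K2 (x, \<theta>)\<bar> \<le> 0 + M * W * exp (4 * M * (\<theta> - x))"
        by simp
    qed (use gd W x0 in auto)
    also have "\<dots> \<le> (M * W) * exp (4 * M * (q - s)) / (4 * M)"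
      using gd W x tau by (auto intro!: divide_right_mono mult_left_mono)
    finally show ?thesis using gd by simp
  qed
  have "Krhs \<tau> f c K1 s q - Krhs \<tau> f c K2 s q = (V f K1 s q - V f K2 s q) +
      (if s + \<tau> < q then NI c K1 (s - q + 1 + \<tau>) - NI c K2 (s - q + 1 + \<tau>) else 0)"
    unfolding Krhs_eq by auto
  also have "\<bar>\<dots>\<bar> \<le> W / 4 * exp (4 * M * (q - s)) + W / 4 * exp (4 * M * (q - s))"
  proof (cases "s + \<tau> < q")
    case True
    then show ?thesis using v n[OF refl True]
        abs_triangle_ineq[of "V f K1 s q - V f K2 s q" "NI c K1 (s - q + 1 + \<tau>) - NI c K2 (s - q + 1 + \<tau>)"]
      by simp
  next
    case False
    have "0 \<le> W / 4 * exp (4 * M * (q - s))" using W by simp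
    then show ?thesis using v False by simp
  qed
  finally show ?thesis by simp
qed


definition Phi :: "real \<Rightarrow> (real \<times> real \<Rightarrow> real) \<Rightarrow> (real \<Rightarrow> real) \<Rightarrow> (real \<times> real \<Rightarrow> real) \<Rightarrow> (real \<times> real \<Rightarrow> real)" where
  "Phi \<tau> f c K = (\<lambda>x. if x \<in> T1 then Krhs \<tau> f c K (fst x) (snd x) else 0)"

definition iter :: "real \<Rightarrow> (real \<times> real \<Rightarrow> real) \<Rightarrow> (real \<Rightarrow> real) \<Rightarrow> nat \<Rightarrow> (real \<times> real \<Rightarrow> real)" where
  "iter \<tau> f c n = (Phi \<tau> f c ^^ n) (\<lambda>_. 0)"

lemma iter_Suc: "iter \<tau> f c (Suc n) = Phi \<tau> f c (iter \<tau> f c n)"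
  by (simp add: iter_def)

lemma Phi_cont:
  assumes g: "good M f c" and tau: "\<tau> \<ge> 0" and K: "continuous_on T1 K"
  shows "continuous_on T1 (Phi \<tau> f c K)"
  using Krhs_cont[OF goodD(2)[OF g] K goodD(4)[OF g] goodD(6)[OF g] tau]
  by (rule continuous_on_eq) (simp add: Phi_def)

lemma iter_cont:
  assumes g: "good M f c" and tau: "\<tau> \<ge> 0"
  shows "continuous_on T1 (iter \<tau> f c n)"
proof (induction n)
  case 0 show ?case by (simp add: iter_def continuous_on_const)
next
  case (Suc n) then show ?case unfolding iter_Suc by (rule Phi_cont[OF g tau])
qed

lemma cont_bounded:
  fixes g :: "real \<times> real \<Rightarrow> real"
  assumes "continuous_on T1 g"
  obtains B where "\<And>x. x \<in> T1 \<Longrightarrow> \<bar>g x\<bar> \<le> B"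
proof -
  have "bounded (g ` T1)"
    by (rule compact_imp_bounded[OF compact_continuous_image[OF assms compact_T1]])
  then obtain B where "\<forall>y\<in>g ` T1. \<bar>y\<bar> \<le> B" by (auto simp: bounded_real)
  then show ?thesis using that by auto
qed

lemma F1_bound:
  assumes g: "good M f c" and sq: "(s, q) \<in> T1"
  shows "\<bar>F1 f s q\<bar> \<le> M"
proof -
  have "\<bar>F1 f s q\<bar> \<le> M * (s + 1 - q - s)"
    unfolding F1_def by (rule int_const_bound) (use sq goodD(3)[OF g] in auto)
  also have "\<dots> \<le> M" using sq goodD(1)[OF g] by (simp add: mult_left_le)
  finally show ?thesis .
qed

lemma exp_ge1: "M > 0 \<Longrightarrow> x \<in> T1 \<Longrightarrow> 1 \<le> exp (4 * M * (snd x - fst x))"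
  by (cases x) simp

lemma exp_le: "M > 0 \<Longrightarrow> x \<in> T1 \<Longrightarrow> exp (4 * M * (snd x - fst x)) \<le> exp (4 * M)"
  by (cases x) simp

lemma iter_diff:
  assumes g: "good M f c" and tau: "\<tau> \<ge> 0"
  shows "\<forall>x\<in>T1. \<bar>iter \<tau> f c (Suc n) x - iter \<tau> f c n x\<bar> \<le> (2 * M * (1/2) ^ n) * exp (4 * M * (snd x - fst x))"
proof (induction n)
  case 0
  show ?case
  proof
    fix x assume x: "x \<in> T1"
    obtain s q where e: "x = (s, q)" by (cases x)
    have sq: "(s, q) \<in> T1" using x e by simp
    have V0: "V f (\<lambda>_. 0) s q = 0" by (simp add: V_def VI_def[abs_def])
    have N0: "NI c (\<lambda>_. 0) y = 0" for y by (simp add: NI_def)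
    have "iter \<tau> f c (Suc 0) x = - F1 f s q + (if s + \<tau> < q then - c (s - q + 1 + \<tau>) else 0)"
      using sq e by (simp add: iter_def Phi_def Krhs_eq V0 N0)
    moreover have "\<bar>c (s - q + 1 + \<tau>)\<bar> \<le> M" if "s + \<tau> < q"
      using that sq tau goodD(5)[OF g] by auto
    ultimately have "\<bar>iter \<tau> f c (Suc 0) x\<bar> \<le> M + M"
      using F1_bound[OF g sq] goodD(1)[OF g] by auto
    also have "\<dots> \<le> 2 * M * exp (4 * M * (snd x - fst x))"
      using exp_ge1[OF goodD(1)[OF g] x] goodD(1)[OF g] by simp
    finally show "\<bar>iter \<tau> f c (Suc 0) x - iter \<tau> f c 0 x\<bar> \<le> 2 * M * (1 / 2) ^ 0 * exp (4 * M * (snd x - fst x))"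
      by (simp add: iter_def)
  qed
next
  case (Suc n)
  show ?case
  proof
    fix x assume x: "x \<in> T1"
    obtain s q where e: "x = (s, q)" by (cases x)
    have sq: "(s, q) \<in> T1" using x e by simp
    have "\<bar>Krhs \<tau> f c (iter \<tau> f c (Suc n)) s q - Krhs \<tau> f c (iter \<tau> f c n) s q\<bar>
        \<le> (2 * M * (1/2) ^ n) / 2 * exp (4 * M * (q - s))"
      by (rule CS[OF g tau iter_cont[OF g tau] iter_cont[OF g tau] _ Suc sq]) (use goodD(1)[OF g] in simp)
    then show "\<bar>iter \<tau> f c (Suc (Suc n)) x - iter \<tau> f c (Suc n) x\<bar> \<le> 2 * M * (1 / 2) ^ Suc n * exp (4 * M * (snd x - fst x))"
      using e sq by (simp add: iter_Suc[of _ _ _ "Suc n"] iter_Suc[of _ _ _ n] Phi_def)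
  qed
qed



lemma aux_ineq:
  fixes E p ee :: real
  assumes "0 \<le> E" "0 \<le> p" "1 \<le> ee"
  shows "(2 * E) * p + ((2 * E) * p) / 2 * ee \<le> (4 * E * ee) * p"
proof -
  have i: "E * p \<le> E * p * ee" "0 \<le> E * p * ee"
    using assms mult_left_mono[of 1 ee "E * p"] by auto
  have e1: "(2 * E) * p + ((2 * E) * p) / 2 * ee = 2 * (E * p) + E * p * ee" by (simp add: algebra_simps)
  have e2: "(4 * E * ee) * p = 4 * (E * p * ee)" by (simp add: algebra_simps)
  show ?thesis unfolding e1 e2 using i by linarith
qed

definition Sol :: "real \<Rightarrow> (real \<times> real \<Rightarrow> real) \<Rightarrow> (real \<Rightarrow> real) \<Rightarrow> (real \<times> real \<Rightarrow> real) \<Rightarrow> bool" where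
  "Sol \<tau> f c K \<longleftrightarrow> continuous_on T1 K \<and>
       (\<forall>s q. (s, q) \<in> T1 \<longrightarrow> K (s, q) = Krhs \<tau> f c K s q) \<and>
       (\<forall>x. x \<notin> T1 \<longrightarrow> K x = 0)"

lemma Sol_exists:
  assumes g: "good M f c" and tau: "\<tau> \<ge> 0"
  shows "\<exists>K. Sol \<tau> f c K"
proof -
  note gd = goodD[OF g]
  define d where "d i x = iter \<tau> f c (Suc i) x - iter \<tau> f c i x" for i x
  define E where "E = 2 * M * exp (4 * M)"
  have E0: "E \<ge> 0" using gd by (simp add: E_def)
  have db: "\<bar>d i x\<bar> \<le> E * (1/2) ^ i" if x: "x \<in> T1" for i x
  proof -
    have "\<bar>d i x\<bar> \<le> (2 * M * (1/2) ^ i) * exp (4 * M * (snd x - fst x))"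
      using iter_diff[OF g tau, of i] x by (simp add: d_def)
    also have "\<dots> \<le> (2 * M * (1/2) ^ i) * exp (4 * M)"
      by (rule mult_left_mono[OF exp_le[OF gd(1) x]]) (use gd in simp)
    finally show ?thesis by (simp add: E_def mult_ac)
  qed
  have sumg: "summable (\<lambda>i. E * (1/2::real) ^ i)"
    by (intro summable_mult summable_geometric) simp
  have sumd: "summable (\<lambda>i. d i x)" if "x \<in> T1" for x
    by (rule summable_comparison_test[OF _ sumg]) (use db[OF that] in auto)
  have partial: "(\<Sum>i<n. d i x) = iter \<tau> f c n x" for n x
    unfolding d_def by (subst sum_lessThan_telescope) (simp add: iter_def)
  have ul: "uniform_limit T1 (\<lambda>n x. \<Sum>i<n. d i x) (\<lambda>x. \<Sum>i. d i x) sequentially"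
    by (rule Weierstrass_m_test[OF _ sumg]) (use db in auto)
  have cont_lim: "continuous_on T1 (\<lambda>x. \<Sum>i. d i x)"
  proof (rule uniform_limit_theorem[OF _ ul])
    show "\<forall>\<^sub>F n in sequentially. continuous_on T1 (\<lambda>x. \<Sum>i<n. d i x)"
      unfolding partial using iter_cont[OF g tau] by simp
  qed simp
  define K where "K x = (if x \<in> T1 then (\<Sum>i. d i x) else 0)" for x
  have Kc: "continuous_on T1 K"
    using cont_lim by (rule continuous_on_eq) (simp add: K_def)
  have tail: "\<bar>K x - iter \<tau> f c n x\<bar> \<le> (2 * E) * (1/2) ^ n" if x: "x \<in> T1" for x n
  proof -
    have "K x = (\<Sum>i. d (i + n) x) + (\<Sum>i<n. d i x)"
      using suminf_split_initial_segment[OF sumd[OF x], of n] x by (simp add: K_def)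
    then have "K x - iter \<tau> f c n x = (\<Sum>i. d (i + n) x)" by (simp add: partial)
    moreover have "norm (\<Sum>i. d (i + n) x) \<le> (\<Sum>i. E * (1/2) ^ (i + n))"
    proof (rule norm_suminf_le)
      show "norm (d (i + n) x) \<le> E * (1 / 2) ^ (i + n)" for i using db[OF x] by simp
      show "summable (\<lambda>i. E * (1 / 2::real) ^ (i + n))"
        by (intro summable_mult summable_geometric summable_ignore_initial_segment) simp
    qed
    moreover have "(\<Sum>i. E * (1/2::real) ^ (i + n)) = (2 * E) * (1/2) ^ n"
    proof -
      have fe: "(\<lambda>i. E * (1/2::real) ^ (i + n)) = (\<lambda>i. (E * (1/2) ^ n) * (1/2) ^ i)"
        by (simp add: power_add fun_eq_iff mult_ac)
      have "(\<Sum>i. E * (1/2::real) ^ (i + n)) = (E * (1/2) ^ n) * (\<Sum>i. (1/2::real) ^ i)"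
        unfolding fe by (rule suminf_mult[OF summable_geometric]) simp
      also have "\<dots> = (2 * E) * (1/2) ^ n" by (subst suminf_geometric) simp_all
      finally show ?thesis .
    qed
    ultimately show ?thesis by simp
  qed
  have fp: "K (s, q) = Krhs \<tau> f c K s q" if sq: "(s, q) \<in> T1" for s q
  proof -
    have "\<bar>K (s, q) - Krhs \<tau> f c K s q\<bar> \<le> 0 + (4 * E * exp (4 * M)) * (1/2) ^ n" for n
    proof -
      have it: "iter \<tau> f c (Suc n) (s, q) = Krhs \<tau> f c (iter \<tau> f c n) s q"
        using sq by (simp add: iter_Suc Phi_def)
      have a: "\<bar>K (s, q) - iter \<tau> f c (Suc n) (s, q)\<bar> \<le> (2 * E) * (1/2) ^ n"
      proof -
        have "\<bar>K (s, q) - iter \<tau> f c (Suc n) (s, q)\<bar> \<le> (2 * E) * (1/2) ^ Suc n" by (rule tail[OF sq])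
        also have "\<dots> \<le> (2 * E) * (1/2) ^ n" using E0 by simp
        finally show ?thesis .
      qed
      have b: "\<bar>Krhs \<tau> f c K s q - Krhs \<tau> f c (iter \<tau> f c n) s q\<bar> \<le> ((2 * E) * (1/2) ^ n) / 2 * exp (4 * M * (q - s))"
      proof (rule CS[OF g tau Kc iter_cont[OF g tau] _ _ sq])
        show "0 \<le> 2 * E * (1 / 2) ^ n" using E0 by simp
        show "\<forall>x\<in>T1. \<bar>K x - iter \<tau> f c n x\<bar> \<le> 2 * E * (1 / 2) ^ n * exp (4 * M * (snd x - fst x))"
        proof
          fix x assume x: "x \<in> T1"
          have "2 * E * (1 / 2) ^ n * 1 \<le> 2 * E * (1 / 2) ^ n * exp (4 * M * (snd x - fst x))"
            using exp_ge1[OF gd(1) x] E0 by (intro mult_left_mono) auto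
          then show "\<bar>K x - iter \<tau> f c n x\<bar> \<le> 2 * E * (1 / 2) ^ n * exp (4 * M * (snd x - fst x))"
            using tail[OF x, of n] by simp
        qed
      qed
      have "((2 * E) * (1/2) ^ n) / 2 * exp (4 * M * (q - s)) \<le> ((2 * E) * (1/2) ^ n) / 2 * exp (4 * M)"
        using exp_le[OF gd(1) sq] E0 by (intro mult_left_mono) auto
      with a b it have "\<bar>K (s, q) - Krhs \<tau> f c K s q\<bar> \<le> (2 * E) * (1/2) ^ n + ((2 * E) * (1/2) ^ n) / 2 * exp (4 * M)"
        by linarith
      also have "\<dots> \<le> (4 * E * exp (4 * M)) * (1/2) ^ n"
        by (rule aux_ineq) (use E0 gd in auto)
      finally show ?thesis by simp
    qed
    then have "\<bar>K (s, q) - Krhs \<tau> f c K s q\<bar> \<le> 0" by (rule half_pow_lim)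
    then show ?thesis by simp
  qed
  have "Sol \<tau> f c K"
    unfolding Sol_def using Kc fp by (auto simp: K_def)
  then show ?thesis by blast
qed

lemma Sol_unique:
  assumes g: "good M f c" and tau: "\<tau> \<ge> 0" and S1: "Sol \<tau> f c K1" and S2: "Sol \<tau> f c K2"
  shows "K1 = K2"
proof
  fix x
  note gd = goodD[OF g]
  have c1: "continuous_on T1 K1" and c2: "continuous_on T1 K2" using S1 S2 by (auto simp: Sol_def)
  obtain B where B: "\<And>x. x \<in> T1 \<Longrightarrow> \<bar>K1 x - K2 x\<bar> \<le> B"
    using cont_bounded[OF continuous_on_diff[OF c1 c2]] by blast
  have "\<bar>(\<lambda>x. K1 x - K2 x) x\<bar> \<le> 2 * 0 * exp (4 * M * (snd x - fst x))" if x: "x \<in> T1"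
  proof (rule weighted[where A = T1 and B = B, OF _ _ _ _ _ x])
    show "0 \<le> 4 * M" using gd by simp
    show "\<And>x. x \<in> T1 \<Longrightarrow> fst x \<le> snd x" by (auto simp: T1_def)
    fix W :: real assume W: "W \<ge> 0" and h: "\<forall>x\<in>T1. \<bar>K1 x - K2 x\<bar> \<le> W * exp (4 * M * (snd x - fst x))"
    show "\<forall>x\<in>T1. \<bar>K1 x - K2 x\<bar> \<le> (0 + W / 2) * exp (4 * M * (snd x - fst x))"
    proof
      fix y assume y: "y \<in> T1"
      obtain s q where e: "y = (s, q)" by (cases y)
      have sq: "(s, q) \<in> T1" using y e by simp
      have "K1 (s, q) - K2 (s, q) = Krhs \<tau> f c K1 s q - Krhs \<tau> f c K2 s q"
        using S1 S2 sq by (simp add: Sol_def)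
      also have "\<bar>\<dots>\<bar> \<le> W / 2 * exp (4 * M * (q - s))"
        by (rule CS[OF g tau c1 c2 W h sq])
      finally show "\<bar>K1 y - K2 y\<bar> \<le> (0 + W / 2) * exp (4 * M * (snd y - fst y))" using e by simp
    qed
  qed (use B in auto)
  then have "x \<in> T1 \<Longrightarrow> K1 x = K2 x" by simp
  moreover have "K1 x = K2 x" if nx: "x \<notin> T1"
  proof -
    have z1: "\<forall>x. x \<notin> T1 \<longrightarrow> K1 x = 0" and z2: "\<forall>x. x \<notin> T1 \<longrightarrow> K2 x = 0"
      using S1 S2 unfolding Sol_def by (simp_all del: T1_iff)
    show ?thesis using z1[rule_format, OF nx] z2[rule_format, OF nx] by simp
  qed
  ultimately show "K1 x = K2 x" by blast
qed

lemma Kop_Sol: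
  assumes g: "good M f c" and tau: "\<tau> \<ge> 0"
  shows "Sol \<tau> f c (Kop \<tau> f c)"
proof -
  have "\<exists>!K. Sol \<tau> f c K"
    using Sol_exists[OF g tau] Sol_unique[OF g tau] by blast
  then have "Sol \<tau> f c (THE K. Sol \<tau> f c K)" by (rule theI')
  then show ?thesis unfolding Kop_def Sol_def by simp
qed


lemma Krhs0_bound:
  assumes g: "good M f c" and tau: "\<tau> \<ge> 0" and sq: "(s, q) \<in> T1"
  shows "\<bar>Krhs \<tau> f c (\<lambda>_. 0) s q\<bar> \<le> 2 * M"
proof -
  have V0: "V f (\<lambda>_. 0) s q = 0" by (simp add: V_def VI_def[abs_def])
  have N0: "NI c (\<lambda>_. 0) y = 0" for y by (simp add: NI_def)
  have e: "Krhs \<tau> f c (\<lambda>_. 0) s q = - F1 f s q + (if s + \<tau> < q then - c (s - q + 1 + \<tau>) else 0)"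
    by (simp add: Krhs_eq V0 N0)
  have "\<bar>c (s - q + 1 + \<tau>)\<bar> \<le> M" if "s + \<tau> < q"
    using that sq tau goodD(5)[OF g] by auto
  then show ?thesis unfolding e using F1_bound[OF g sq] goodD(1)[OF g] by auto
qed

definition BK :: "real \<Rightarrow> real" where "BK M = 4 * M * exp (4 * M)"

lemma K_bound:
  assumes g: "good M f c" and tau: "\<tau> \<ge> 0" and x: "x \<in> T1"
  shows "\<bar>Kop \<tau> f c x\<bar> \<le> BK M"
proof -
  note gd = goodD[OF g]
  have S: "Sol \<tau> f c (Kop \<tau> f c)" by (rule Kop_Sol[OF g tau])
  then have Kc: "continuous_on T1 (Kop \<tau> f c)" by (simp add: Sol_def)
  obtain B where B: "\<And>x. x \<in> T1 \<Longrightarrow> \<bar>Kop \<tau> f c x\<bar> \<le> B"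
    using cont_bounded[OF Kc] by blast
  have "\<bar>Kop \<tau> f c x\<bar> \<le> 2 * (2 * M) * exp (4 * M * (snd x - fst x))"
  proof (rule weighted[where A = T1 and B = B and D = "Kop \<tau> f c", OF _ _ _ _ _ x])
    show "0 \<le> 4 * M" using gd by simp
    show "0 \<le> 2 * M" using gd by simp
    show "\<And>x. x \<in> T1 \<Longrightarrow> fst x \<le> snd x" by (auto simp: T1_def)
    fix W :: real assume W: "W \<ge> 0" and h: "\<forall>x\<in>T1. \<bar>Kop \<tau> f c x\<bar> \<le> W * exp (4 * M * (snd x - fst x))"
    show "\<forall>x\<in>T1. \<bar>Kop \<tau> f c x\<bar> \<le> (2 * M + W / 2) * exp (4 * M * (snd x - fst x))"
    proof
      fix y assume y: "y \<in> T1"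
      obtain s q where e: "y = (s, q)" by (cases y)
      have sq: "(s, q) \<in> T1" using y e by simp
      have h': "\<forall>x\<in>T1. \<bar>Kop \<tau> f c x - (\<lambda>_. 0) x\<bar> \<le> W * exp (4 * M * (snd x - fst x))"
        using h by simp
      have "Kop \<tau> f c (s, q) = (Krhs \<tau> f c (Kop \<tau> f c) s q - Krhs \<tau> f c (\<lambda>_. 0) s q) + Krhs \<tau> f c (\<lambda>_. 0) s q"
        using S sq by (simp add: Sol_def)
      then have "\<bar>Kop \<tau> f c (s, q)\<bar> \<le> \<bar>Krhs \<tau> f c (Kop \<tau> f c) s q - Krhs \<tau> f c (\<lambda>_. 0) s q\<bar> + \<bar>Krhs \<tau> f c (\<lambda>_. 0) s q\<bar>"
        by (metis abs_triangle_ineq)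
      moreover have "\<bar>Krhs \<tau> f c (Kop \<tau> f c) s q - Krhs \<tau> f c (\<lambda>_. 0) s q\<bar> \<le> W / 2 * exp (4 * M * (q - s))"
        by (rule CS[OF g tau Kc continuous_on_const W h' sq])
      moreover have "\<bar>Krhs \<tau> f c (\<lambda>_. 0) s q\<bar> \<le> 2 * M * exp (4 * M * (q - s))"
      proof -
        have "2 * M * 1 \<le> 2 * M * exp (4 * M * (q - s))"
          using exp_ge1[OF gd(1) sq] gd(1) by (intro mult_left_mono) auto
        then show ?thesis using Krhs0_bound[OF g tau sq] by linarith
      qed
      ultimately have "\<bar>Kop \<tau> f c (s, q)\<bar> \<le> W / 2 * exp (4 * M * (q - s)) + 2 * M * exp (4 * M * (q - s))"
        by linarith
      then have "\<bar>Kop \<tau> f c (s, q)\<bar> \<le> (2 * M + W / 2) * exp (4 * M * (q - s))"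
        by (simp add: algebra_simps)
      then show "\<bar>Kop \<tau> f c y\<bar> \<le> (2 * M + W / 2) * exp (4 * M * (snd y - fst y))" using e by simp
    qed
  qed (use B in auto)
  also have "\<dots> \<le> 2 * (2 * M) * exp (4 * M)"
    using exp_le[OF gd(1) x] gd(1) by simp
  finally show ?thesis by (simp add: BK_def)
qed

lemma BK_nonneg: "M > 0 \<Longrightarrow> BK M \<ge> 0" by (simp add: BK_def)

lemma NI_split:
  fixes K :: "real \<times> real \<Rightarrow> real" and c :: "real \<Rightarrow> real"
  assumes c: "continuous_on {0..1} c" and K: "continuous_on T1 K" and xy: "0 \<le> x" "x \<le> y" "y \<le> 1"
  shows "NI c K y - NI c K x = integral {y..1} (\<lambda>\<theta>. c \<theta> * (K (y, \<theta>) - K (x, \<theta>))) - integral {x..y} (\<lambda>\<theta>. c \<theta> * K (x, \<theta>))"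
proof -
  have "NI c K x = integral {x..y} (\<lambda>\<theta>. c \<theta> * K (x, \<theta>)) + integral {y..1} (\<lambda>\<theta>. c \<theta> * K (x, \<theta>))"
    unfolding NI_def using xy by (intro Henstock_Kurzweil_Integration.integral_combine[symmetric] int_NIi[OF c K]) auto
  moreover have "integral {y..1} (\<lambda>\<theta>. c \<theta> * (K (y, \<theta>) - K (x, \<theta>))) = NI c K y - integral {y..1} (\<lambda>\<theta>. c \<theta> * K (x, \<theta>))"
    unfolding NI_def right_diff_distrib using xy by (intro integral_diff int_NIi[OF c K]) auto
  ultimately show ?thesis by simp
qed

lemma Jop_Nf:
  assumes "\<sigma> \<ge> 0"
  shows "Jop \<tau> f c \<sigma> = Nf c (Kop \<tau> f c) \<sigma>"
  unfolding Jop_def Nf_def NI_def by (simp add: mult.commute)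


definition lipfc :: "real \<Rightarrow> (real \<times> real \<Rightarrow> real) \<Rightarrow> (real \<Rightarrow> real) \<Rightarrow> bool" where
  "lipfc M f c \<longleftrightarrow> (\<forall>a b y. (a, y) \<in> T1 \<longrightarrow> (b, y) \<in> T1 \<longrightarrow> \<bar>f (a, y) - f (b, y)\<bar> \<le> 2 * M * \<bar>a - b\<bar>) \<and>
     (\<forall>x y. x \<in> {0..1} \<longrightarrow> y \<in> {0..1} \<longrightarrow> \<bar>c x - c y\<bar> \<le> M * \<bar>x - y\<bar>)"

lemma lipfc_intro: "C1_T1_bounded f M \<Longrightarrow> Cunder_bounded c M \<Longrightarrow> lipfc M f c"
  unfolding lipfc_def using C1_lip Cu_lip by blast

lemma lipfD: "lipfc M f c \<Longrightarrow> (a, y) \<in> T1 \<Longrightarrow> (b, y) \<in> T1 \<Longrightarrow> \<bar>f (a, y) - f (b, y)\<bar> \<le> 2 * M * \<bar>a - b\<bar>"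
  unfolding lipfc_def by blast
lemma lipcD: "lipfc M f c \<Longrightarrow> 0 \<le> x \<Longrightarrow> x \<le> 1 \<Longrightarrow> 0 \<le> y \<Longrightarrow> y \<le> 1 \<Longrightarrow> \<bar>c x - c y\<bar> \<le> M * \<bar>x - y\<bar>"
  unfolding lipfc_def by auto

lemma F1_shift:
  assumes g: "good M f c" and lp: "lipfc M f c" and sq: "(s, q) \<in> T1" and h: "h \<ge> 0" "s + h \<le> q"
  shows "\<bar>F1 f (s + h) q - F1 f s q\<bar> \<le> 2 * M * h"
proof -
  note gd = goodD[OF g]
  have e: "F1 f (s + h) q = integral {s..s + 1 - q} (\<lambda>\<theta>. f (\<theta> + h, \<theta> - s + q))"
    using integral_shift_real_ivl[where f = "\<lambda>\<theta>. f (\<theta>, \<theta> - (s + h) + q)" and a = "s + h" and c = h and b = "s + h + 1 - q"]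
    by (simp add: F1_def algebra_simps)
  have i1: "(\<lambda>\<theta>. f (\<theta> + h, \<theta> - s + q)) integrable_on {s..s + 1 - q}"
  proof -
    have "continuous_on {s..s + 1 - q} (\<lambda>\<theta>. f (\<theta> + h, \<theta> - s + q))"
      by (rule continuous_on_compose2[OF gd(2), of _ "\<lambda>\<theta>. (\<theta> + h, \<theta> - s + q)"])
         (use sq h in \<open>auto intro!: continuous_intros\<close>)
    then show ?thesis by (rule integrable_continuous_interval)
  qed
  have "F1 f (s + h) q - F1 f s q = integral {s..s + 1 - q} (\<lambda>\<theta>. f (\<theta> + h, \<theta> - s + q) - f (\<theta>, \<theta> - s + q))"
    apply (subst e) apply (subst F1_def) by (rule integral_diff[symmetric, OF i1 int_F1i[OF gd(2) sq]])
  also have "\<bar>\<dots>\<bar> \<le> (2 * M * h) * (s + 1 - q - s)"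
  proof (rule int_const_bound)
    fix \<theta> assume th: "\<theta> \<in> {s..s + 1 - q}"
    have "\<bar>f (\<theta> + h, \<theta> - s + q) - f (\<theta>, \<theta> - s + q)\<bar> \<le> 2 * M * \<bar>\<theta> + h - \<theta>\<bar>"
      by (rule lipfD[OF lp]) (use th sq h in auto)
    then show "\<bar>f (\<theta> + h, \<theta> - s + q) - f (\<theta>, \<theta> - s + q)\<bar> \<le> 2 * M * h" using h by simp
  qed (use sq in auto)
  also have "\<dots> \<le> 2 * M * h" using sq h gd(1) by (simp add: mult_left_le)
  finally show ?thesis .
qed


lemma V_shift:
  fixes K :: "real \<times> real \<Rightarrow> real"
  assumes g: "good M f c" and K: "continuous_on T1 K" and KB: "\<And>x. x \<in> T1 \<Longrightarrow> \<bar>K x\<bar> \<le> B"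
    and W: "W \<ge> 0"
    and hW: "\<And>\<theta> r. (\<theta>, r) \<in> T1 \<Longrightarrow> \<theta> + h \<le> r \<Longrightarrow> \<bar>K (\<theta> + h, r) - K (\<theta>, r)\<bar> \<le> W * exp (4 * M * (r - \<theta>))"
    and sq: "(s, q) \<in> T1" and h: "h \<ge> 0" "s + h \<le> q"
  shows "\<bar>V f K (s + h) q - V f K s q\<bar> \<le> M * B * h + W / 4 * exp (4 * M * (q - s))"
proof -
  note gd = goodD[OF g]
  have B0: "B \<ge> 0" using KB[OF sq] by simp
  have e: "V f K (s + h) q = integral {s..s + 1 - q} (\<lambda>\<theta>. VI f K (s + h) q (\<theta> + h))"
    using integral_shift_real_ivl[where f = "VI f K (s + h) q" and a = "s + h" and c = h and b = "s + h + 1 - q"]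
    by (simp add: V_def algebra_simps)
  have i1: "(\<lambda>\<theta>. VI f K (s + h) q (\<theta> + h)) integrable_on {s..s + 1 - q}"
  proof -
    have "continuous_on {s..s + 1 - q} (\<lambda>\<theta>. Gf f K (\<theta> + h, q - (s + h)))"
      by (rule continuous_on_compose2[OF Gf_cont[OF gd(2) K], of _ "\<lambda>\<theta>. (\<theta> + h, q - (s + h))"])
         (use sq h in \<open>auto intro!: continuous_intros simp: Delta_def\<close>)
    then show ?thesis unfolding VI_Gf by (rule integrable_continuous_interval)
  qed
  have i2: "VI f K s q integrable_on {s..s + 1 - q}"
    by (rule int_VI[OF gd(2) K sq]) auto
  have "V f K (s + h) q - V f K s q = integral {s..s + 1 - q} (\<lambda>\<theta>. VI f K (s + h) q (\<theta> + h) - VI f K s q \<theta>)"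
    apply (subst e) apply (subst V_def) by (rule integral_diff[symmetric, OF i1 i2])
  also have "\<bar>\<dots>\<bar> \<le> (M * B * h + W / 4 * exp (4 * M * (q - s))) * (s + 1 - q - s)"
  proof (rule int_const_bound)
    fix \<theta> assume th: "\<theta> \<in> {s..s + 1 - q}"
    define y where "y = \<theta> - s + q"
    have th': "0 \<le> \<theta>" "\<theta> + h \<le> y" "y \<le> 1" using th sq h by (auto simp: y_def)
    have e1: "VI f K (s + h) q (\<theta> + h) = integral {\<theta> + h..y} (\<lambda>r. f (r, y) * K (\<theta> + h, r))"
      by (simp add: VI_def y_def algebra_simps)
    have e2: "VI f K s q \<theta> = integral {\<theta>..\<theta> + h} (\<lambda>r. f (r, y) * K (\<theta>, r)) + integral {\<theta> + h..y} (\<lambda>r. f (r, y) * K (\<theta>, r))"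
      unfolding VI_def y_def[symmetric] using th' h
      by (intro Henstock_Kurzweil_Integration.integral_combine[symmetric] int_inner[OF gd(2) K]) auto
    have e3: "integral {\<theta> + h..y} (\<lambda>r. f (r, y) * K (\<theta> + h, r)) - integral {\<theta> + h..y} (\<lambda>r. f (r, y) * K (\<theta>, r))
        = integral {\<theta> + h..y} (\<lambda>r. f (r, y) * (K (\<theta> + h, r) - K (\<theta>, r)))"
      unfolding right_diff_distrib using th' h
      by (intro integral_diff[symmetric] int_inner[OF gd(2) K]) auto
    have b1: "\<bar>integral {\<theta> + h..y} (\<lambda>r. f (r, y) * (K (\<theta> + h, r) - K (\<theta>, r)))\<bar>
        \<le> 0 * (y - (\<theta> + h)) + (M * W) * exp (4 * M * (y - \<theta>)) / (4 * M)"
    proof (rule int_exp_bound)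
      fix r assume r: "r \<in> {\<theta> + h..y}"
      have "\<bar>f (r, y) * (K (\<theta> + h, r) - K (\<theta>, r))\<bar> \<le> M * (W * exp (4 * M * (r - \<theta>)))"
        by (rule abs_mult_le) (use gd(3) hW r th' h in auto)
      then show "\<bar>f (r, y) * (K (\<theta> + h, r) - K (\<theta>, r))\<bar> \<le> 0 + M * W * exp (4 * M * (r - \<theta>))" by simp
    qed (use gd W th' in auto)
    have b2: "\<bar>integral {\<theta>..\<theta> + h} (\<lambda>r. f (r, y) * K (\<theta>, r))\<bar> \<le> (M * B) * (\<theta> + h - \<theta>)"
    proof (rule int_const_bound)
      fix r assume r: "r \<in> {\<theta>..\<theta> + h}"
      show "\<bar>f (r, y) * K (\<theta>, r)\<bar> \<le> M * B"
        by (rule abs_mult_le) (use gd(3) KB r th' h in auto)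
    qed (use h in auto)
    have "y - \<theta> = q - s" by (simp add: y_def)
    then have b1': "\<bar>integral {\<theta> + h..y} (\<lambda>r. f (r, y) * (K (\<theta> + h, r) - K (\<theta>, r)))\<bar> \<le> W / 4 * exp (4 * M * (q - s))"
      using b1 gd(1) by simp
    have "VI f K (s + h) q (\<theta> + h) - VI f K s q \<theta> =
        integral {\<theta> + h..y} (\<lambda>r. f (r, y) * (K (\<theta> + h, r) - K (\<theta>, r))) - integral {\<theta>..\<theta> + h} (\<lambda>r. f (r, y) * K (\<theta>, r))"
      using e1 e2 e3 by simp
    then show "\<bar>VI f K (s + h) q (\<theta> + h) - VI f K s q \<theta>\<bar> \<le> M * B * h + W / 4 * exp (4 * M * (q - s))"
      using b1' b2 by (smt (verit))
  qed (use sq in auto)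
  also have "\<dots> \<le> M * B * h + W / 4 * exp (4 * M * (q - s))"
    using sq h gd(1) W B0 by (intro mult_left_le) auto
  finally show ?thesis .
qed


lemma N_shift:
  fixes K :: "real \<times> real \<Rightarrow> real"
  assumes g: "good M f c" and lp: "lipfc M f c" and K: "continuous_on T1 K" and KB: "\<And>x. x \<in> T1 \<Longrightarrow> \<bar>K x\<bar> \<le> B"
    and W: "W \<ge> 0"
    and hW: "\<And>\<theta> r. (\<theta>, r) \<in> T1 \<Longrightarrow> \<theta> + h \<le> r \<Longrightarrow> \<bar>K (\<theta> + h, r) - K (\<theta>, r)\<bar> \<le> W * exp (4 * M * (r - \<theta>))"
    and sq: "(s, q) \<in> T1" and h: "h \<ge> 0" and tau: "\<tau> \<ge> 0" and x: "x = s - q + 1 + \<tau>"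
  shows "\<bar>Nf c K (x + h) - Nf c K x\<bar> \<le> (M + M * B) * h + W / 4 * exp (4 * M * (q - s))"
proof -
  note gd = goodD[OF g]
  have B0: "B \<ge> 0" using KB[OF sq] by simp
  have x0: "0 \<le> x" and x1: "1 - x \<le> q - s" using x sq tau by auto
  have eW: "0 \<le> W / 4 * exp (4 * M * (q - s))" using W by simp
  show ?thesis
  proof (cases "x + h < 1")
    case True
    have nx: "Nf c K (x + h) - Nf c K x = - (c (x + h) - c x) + (NI c K (x + h) - NI c K x)"
      using True h by (simp add: Nf_def)
    have sp: "NI c K (x + h) - NI c K x = integral {x + h..1} (\<lambda>\<theta>. c \<theta> * (K (x + h, \<theta>) - K (x, \<theta>))) - integral {x..x + h} (\<lambda>\<theta>. c \<theta> * K (x, \<theta>))"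
      by (rule NI_split[OF gd(4) K x0]) (use True h in auto)
    have b1: "\<bar>integral {x + h..1} (\<lambda>\<theta>. c \<theta> * (K (x + h, \<theta>) - K (x, \<theta>)))\<bar>
        \<le> 0 * (1 - (x + h)) + (M * W) * exp (4 * M * (1 - x)) / (4 * M)"
    proof (rule int_exp_bound)
      fix \<theta> assume th: "\<theta> \<in> {x + h..1}"
      have "\<bar>c \<theta> * (K (x + h, \<theta>) - K (x, \<theta>))\<bar> \<le> M * (W * exp (4 * M * (\<theta> - x)))"
        by (rule abs_mult_le) (use gd(5) hW th x0 h in auto)
      then show "\<bar>c \<theta> * (K (x + h, \<theta>) - K (x, \<theta>))\<bar> \<le> 0 + M * W * exp (4 * M * (\<theta> - x))" by simp
    qed (use gd W True in auto)
    have "(M * W) * exp (4 * M * (1 - x)) / (4 * M) = W / 4 * exp (4 * M * (1 - x))" using gd(1) by simp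
    also have "\<dots> \<le> W / 4 * exp (4 * M * (q - s))" using x1 W gd(1) by (intro mult_left_mono) auto
    finally have b1': "\<bar>integral {x + h..1} (\<lambda>\<theta>. c \<theta> * (K (x + h, \<theta>) - K (x, \<theta>)))\<bar> \<le> W / 4 * exp (4 * M * (q - s))"
      using b1 by simp
    have b2: "\<bar>integral {x..x + h} (\<lambda>\<theta>. c \<theta> * K (x, \<theta>))\<bar> \<le> (M * B) * (x + h - x)"
    proof (rule int_const_bound)
      fix \<theta> assume th: "\<theta> \<in> {x..x + h}"
      show "\<bar>c \<theta> * K (x, \<theta>)\<bar> \<le> M * B"
        by (rule abs_mult_le) (use gd(5) KB th x0 h True in auto)
    qed (use h in auto)
    have b3: "\<bar>c (x + h) - c x\<bar> \<le> M * \<bar>x + h - x\<bar>"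
      by (rule lipcD[OF lp]) (use x0 h True in auto)
    show ?thesis unfolding nx sp using b1' b2 b3 h by (simp add: algebra_simps)
  next
    case False
    note F = False
    show ?thesis
    proof (cases "x < 1")
      case True
      have nx: "Nf c K (x + h) - Nf c K x = c x - NI c K x"
        using True F by (simp add: Nf_def)
      have b3: "\<bar>c x - c 1\<bar> \<le> M * \<bar>x - 1\<bar>"
        by (rule lipcD[OF lp]) (use x0 True in auto)
      have b2: "\<bar>NI c K x\<bar> \<le> (M * B) * (1 - x)"
        unfolding NI_def
      proof (rule int_const_bound)
        fix \<theta> assume th: "\<theta> \<in> {x..1}"
        show "\<bar>c \<theta> * K (x, \<theta>)\<bar> \<le> M * B"
          by (rule abs_mult_le) (use gd(5) KB th x0 in auto)
      qed (use True in auto)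
      have "1 - x \<le> h" using F by simp
      then have "M * (1 - x) \<le> M * h" "(M * B) * (1 - x) \<le> (M * B) * h"
        using gd(1) B0 by (auto intro: mult_left_mono)
      then show ?thesis unfolding nx using b2 b3 gd(6) True eW by (simp add: algebra_simps)
    next
      case False
      then show ?thesis using F eW h gd(1) B0 by (simp add: Nf_def)
    qed
  qed
qed


definition LS :: "real \<Rightarrow> real" where "LS M = 2 * (3 * M + 2 * M * BK M) * exp (4 * M)"

lemma K_s_lip:
  assumes g: "good M f c" and lp: "lipfc M f c" and tau: "\<tau> \<ge> 0"
    and sq: "(s, q) \<in> T1" and h: "h \<ge> 0" "s + h \<le> q"
  shows "\<bar>Kop \<tau> f c (s + h, q) - Kop \<tau> f c (s, q)\<bar> \<le> LS M * h"
proof -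
  note gd = goodD[OF g]
  define K where "K = Kop \<tau> f c"
  have S: "Sol \<tau> f c K" unfolding K_def by (rule Kop_Sol[OF g tau])
  then have Kc: "continuous_on T1 K" by (simp add: Sol_def)
  have KB: "\<And>x. x \<in> T1 \<Longrightarrow> \<bar>K x\<bar> \<le> BK M" unfolding K_def by (rule K_bound[OF g tau])
  have BK0: "BK M \<ge> 0" using BK_nonneg[OF gd(1)] .
  define A where "A = {x \<in> T1. fst x + h \<le> snd x}"
  define a where "a = (3 * M + 2 * M * BK M) * h"
  have a0: "a \<ge> 0" using gd(1) BK0 h by (simp add: a_def)
  have "\<bar>(\<lambda>x. K (fst x + h, snd x) - K x) (s, q)\<bar> \<le> 2 * a * exp (4 * M * (snd (s, q) - fst (s, q)))"
  proof (rule weighted[where A = A and B = "2 * BK M"])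
    show "0 \<le> 4 * M" using gd by simp
    show "0 \<le> a" by (rule a0)
    show "\<And>x. x \<in> A \<Longrightarrow> fst x \<le> snd x" by (auto simp: A_def T1_def)
    show "(s, q) \<in> A" using sq h by (simp add: A_def)
    show "\<bar>K (fst x + h, snd x) - K x\<bar> \<le> 2 * BK M" if "x \<in> A" for x
    proof -
      have "fst x + h \<ge> 0" "fst x + h \<le> snd x" "snd x \<le> 1" using that h by (auto simp: A_def T1_def)
      then have "\<bar>K (fst x + h, snd x)\<bar> \<le> BK M" by (intro KB) simp
      moreover have "\<bar>K x\<bar> \<le> BK M" using that KB by (simp add: A_def)
      ultimately show ?thesis by linarith
    qed
    fix W :: real assume W: "W \<ge> 0" and hA: "\<forall>x\<in>A. \<bar>K (fst x + h, snd x) - K x\<bar> \<le> W * exp (4 * M * (snd x - fst x))"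
    have hW: "\<bar>K (\<theta> + h, r) - K (\<theta>, r)\<bar> \<le> W * exp (4 * M * (r - \<theta>))" if "(\<theta>, r) \<in> T1" "\<theta> + h \<le> r" for \<theta> r
      using hA that by (auto simp: A_def)
    show "\<forall>x\<in>A. \<bar>K (fst x + h, snd x) - K x\<bar> \<le> (a + W / 2) * exp (4 * M * (snd x - fst x))"
    proof
      fix y assume y: "y \<in> A"
      obtain s' q' where e: "y = (s', q')" by (cases y)
      have sq': "(s', q') \<in> T1" and hq: "s' + h \<le> q'" using y e by (auto simp: A_def)
      have sq2: "(s' + h, q') \<in> T1" using sq' hq h by auto
      define x where "x = s' - q' + 1 + \<tau>"
      have "K (s' + h, q') - K (s', q') = Krhs \<tau> f c K (s' + h) q' - Krhs \<tau> f c K s' q'"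
        using S sq' sq2 by (simp add: Sol_def)
      also have "\<dots> = - (F1 f (s' + h) q' - F1 f s' q') + (V f K (s' + h) q' - V f K s' q') + (Nf c K (x + h) - Nf c K x)"
        unfolding Krhs_Nf[where c = c and f = f and K = K, OF sq' tau gd(6)] Krhs_Nf[where c = c and f = f and K = K, OF sq2 tau gd(6)] x_def by (simp add: algebra_simps)
      finally have eq: "K (s' + h, q') - K (s', q') = - (F1 f (s' + h) q' - F1 f s' q') + (V f K (s' + h) q' - V f K s' q') + (Nf c K (x + h) - Nf c K x)" .
      have p1: "\<bar>F1 f (s' + h) q' - F1 f s' q'\<bar> \<le> 2 * M * h"
        by (rule F1_shift[OF g lp sq' h(1) hq])
      have p2: "\<bar>V f K (s' + h) q' - V f K s' q'\<bar> \<le> M * BK M * h + W / 4 * exp (4 * M * (q' - s'))"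
        by (rule V_shift[OF g Kc KB W hW sq' h(1) hq])
      have p3: "\<bar>Nf c K (x + h) - Nf c K x\<bar> \<le> (M + M * BK M) * h + W / 4 * exp (4 * M * (q' - s'))"
        by (rule N_shift[OF g lp Kc KB W hW sq' h(1) tau x_def])
      have "\<bar>K (s' + h, q') - K (s', q')\<bar> \<le> a + W / 2 * exp (4 * M * (q' - s'))"
        unfolding eq using p1 p2 p3 by (simp add: a_def algebra_simps)
      also have "\<dots> \<le> (a + W / 2) * exp (4 * M * (q' - s'))"
      proof -
        have "a * 1 \<le> a * exp (4 * M * (q' - s'))"
          using exp_ge1[OF gd(1) sq'] a0 by (intro mult_left_mono) auto
        then show ?thesis by (simp add: algebra_simps)
      qed
      finally show "\<bar>K (fst y + h, snd y) - K y\<bar> \<le> (a + W / 2) * exp (4 * M * (snd y - fst y))"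
        using e by simp
    qed
  qed
  also have "\<dots> \<le> 2 * a * exp (4 * M)"
    using exp_le[OF gd(1) sq] a0 by (intro mult_left_mono) auto
  finally show ?thesis by (simp add: K_def LS_def a_def mult_ac)
qed


definition CN :: "real \<Rightarrow> real" where "CN M = M + M * BK M + M * LS M"

lemma LS_nonneg: "M > 0 \<Longrightarrow> LS M \<ge> 0" by (simp add: LS_def BK_def)

lemma Nf_lip_le:
  assumes g: "good M f c" and lp: "lipfc M f c" and tau: "\<tau> \<ge> 0" and xy: "0 \<le> x" "x \<le> y"
  shows "\<bar>Nf c (Kop \<tau> f c) y - Nf c (Kop \<tau> f c) x\<bar> \<le> CN M * (y - x)"
proof -
  note gd = goodD[OF g]
  define K where "K = Kop \<tau> f c"
  have S: "Sol \<tau> f c K" unfolding K_def by (rule Kop_Sol[OF g tau])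
  then have Kc: "continuous_on T1 K" by (simp add: Sol_def)
  have KB: "\<And>x. x \<in> T1 \<Longrightarrow> \<bar>K x\<bar> \<le> BK M" unfolding K_def by (rule K_bound[OF g tau])
  have BK0: "BK M \<ge> 0" using BK_nonneg[OF gd(1)] .
  have LS0: "LS M \<ge> 0" using LS_nonneg[OF gd(1)] .
  have d0: "y - x \<ge> 0" using xy by simp
  have "\<bar>Nf c K y - Nf c K x\<bar> \<le> CN M * (y - x)"
  proof (cases "y < 1")
    case True
    have nx: "Nf c K y - Nf c K x = - (c y - c x) + (NI c K y - NI c K x)"
      using True xy by (simp add: Nf_def)
    have sp: "NI c K y - NI c K x = integral {y..1} (\<lambda>\<theta>. c \<theta> * (K (y, \<theta>) - K (x, \<theta>))) - integral {x..y} (\<lambda>\<theta>. c \<theta> * K (x, \<theta>))"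
      by (rule NI_split[OF gd(4) Kc xy]) (use True in auto)
    have b1: "\<bar>integral {y..1} (\<lambda>\<theta>. c \<theta> * (K (y, \<theta>) - K (x, \<theta>)))\<bar> \<le> (M * (LS M * (y - x))) * (1 - y)"
    proof (rule int_const_bound)
      fix \<theta> assume th: "\<theta> \<in> {y..1}"
      have "\<bar>K (x + (y - x), \<theta>) - K (x, \<theta>)\<bar> \<le> LS M * (y - x)"
        unfolding K_def by (rule K_s_lip[OF g lp tau]) (use xy th in auto)
      then show "\<bar>c \<theta> * (K (y, \<theta>) - K (x, \<theta>))\<bar> \<le> M * (LS M * (y - x))"
        by (intro abs_mult_le) (use gd(5) th xy in auto)
    qed (use True in auto)
    have b1': "(M * (LS M * (y - x))) * (1 - y) \<le> M * LS M * (y - x)"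
    proof -
      have "(y - x) * (1 - y) \<le> (y - x)" using xy d0 by (intro mult_left_le) auto
      then have "(M * LS M) * ((y - x) * (1 - y)) \<le> (M * LS M) * (y - x)"
        using gd(1) LS0 by (intro mult_left_mono) auto
      then show ?thesis by (simp add: mult_ac)
    qed
    have b2: "\<bar>integral {x..y} (\<lambda>\<theta>. c \<theta> * K (x, \<theta>))\<bar> \<le> (M * BK M) * (y - x)"
    proof (rule int_const_bound)
      fix \<theta> assume th: "\<theta> \<in> {x..y}"
      show "\<bar>c \<theta> * K (x, \<theta>)\<bar> \<le> M * BK M"
        by (rule abs_mult_le) (use gd(5) KB th xy True in auto)
    qed (use xy in auto)
    have b3: "\<bar>c y - c x\<bar> \<le> M * \<bar>y - x\<bar>"
      by (rule lipcD[OF lp]) (use xy True in auto)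
    show ?thesis unfolding nx sp using b1 b1' b2 b3 d0 by (simp add: CN_def algebra_simps)
  next
    case F: False
    show ?thesis
    proof (cases "x < 1")
      case True
      have nx: "Nf c K y - Nf c K x = c x - NI c K x"
        using True F by (simp add: Nf_def)
      have b3: "\<bar>c x - c 1\<bar> \<le> M * \<bar>x - 1\<bar>"
        by (rule lipcD[OF lp]) (use xy True in auto)
      have b2: "\<bar>NI c K x\<bar> \<le> (M * BK M) * (1 - x)"
        unfolding NI_def
      proof (rule int_const_bound)
        fix \<theta> assume th: "\<theta> \<in> {x..1}"
        show "\<bar>c \<theta> * K (x, \<theta>)\<bar> \<le> M * BK M"
          by (rule abs_mult_le) (use gd(5) KB th xy in auto)
      qed (use True in auto)
      have "1 - x \<le> y - x" using F by simp
      then have "M * (1 - x) \<le> M * (y - x)" "(M * BK M) * (1 - x) \<le> (M * BK M) * (y - x)"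
        "0 \<le> M * LS M * (y - x)"
        using gd(1) BK0 LS0 d0 by (auto intro: mult_left_mono)
      then show ?thesis unfolding nx using b2 b3 gd(6) True by (simp add: CN_def algebra_simps)
    next
      case False
      have "0 \<le> CN M * (y - x)" using gd(1) BK0 LS0 d0 by (simp add: CN_def)
      then show ?thesis using F False by (simp add: Nf_def)
    qed
  qed
  then show ?thesis by (simp add: K_def)
qed

lemma Nf_lip:
  assumes g: "good M f c" and lp: "lipfc M f c" and tau: "\<tau> \<ge> 0" and xy: "0 \<le> x" "0 \<le> y"
  shows "\<bar>Nf c (Kop \<tau> f c) y - Nf c (Kop \<tau> f c) x\<bar> \<le> CN M * \<bar>y - x\<bar>"
proof (cases "x \<le> y")
  case True then show ?thesis using Nf_lip_le[OF g lp tau xy(1) True] by simp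
next
  case False then show ?thesis using Nf_lip_le[OF g lp tau xy(2), of x] by (simp add: abs_minus_commute)
qed


lemma FB:
  fixes K :: "real \<times> real \<Rightarrow> real"
  assumes g1: "good M f1 c1" and g2: "good M f2 c2" and K: "continuous_on T1 K"
    and KB: "\<And>x. x \<in> T1 \<Longrightarrow> \<bar>K x\<bar> \<le> B" and B0: "B \<ge> 0" and d0: "\<delta> \<ge> 0"
    and df: "\<And>x. x \<in> T1 \<Longrightarrow> \<bar>f1 x - f2 x\<bar> \<le> \<delta>"
    and dc: "\<And>x. 0 \<le> x \<Longrightarrow> x \<le> 1 \<Longrightarrow> \<bar>c1 x - c2 x\<bar> \<le> \<delta>"
    and tau: "\<tau> \<ge> 0" and sq: "(s, q) \<in> T1"
  shows "\<bar>Krhs \<tau> f1 c1 K s q - Krhs \<tau> f2 c2 K s q\<bar> \<le> 2 * \<delta> * (1 + B)"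
proof -
  note gd1 = goodD[OF g1] and gd2 = goodD[OF g2]
  have l: "4 * M > 0" using gd1 by simp
  have p1: "\<bar>F1 f1 s q - F1 f2 s q\<bar> \<le> \<delta>"
  proof -
    have "\<bar>F1 f1 s q - F1 f2 s q\<bar> \<le> \<delta> * (s + 1 - q - s)"
      unfolding F1_diff[OF gd1(2) gd2(2) sq] by (rule int_const_bound) (use sq df in auto)
    also have "\<dots> \<le> \<delta>" using sq d0 by (simp add: mult_left_le)
    finally show ?thesis .
  qed
  have p2: "\<bar>V f1 K s q - V f2 K s q\<bar> \<le> \<delta> * B + 0 * exp (4 * M * (q - s)) / (4 * M)"
    unfolding V_diff[OF gd1(2) gd2(2) K K sq]
  proof (rule EV[OF sq l _ _ order_refl])
    fix \<theta> r assume h: "s \<le> \<theta>" "\<theta> \<le> s + 1 - q" "\<theta> \<le> r" "r \<le> \<theta> - s + q"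
    have "\<bar>f1 (r, \<theta> - s + q) * K (\<theta>, r) - f2 (r, \<theta> - s + q) * K (\<theta>, r)\<bar>
        = \<bar>(f1 (r, \<theta> - s + q) - f2 (r, \<theta> - s + q)) * K (\<theta>, r)\<bar>" by (simp add: algebra_simps)
    also have "\<dots> \<le> \<delta> * B"
      by (rule abs_mult_le) (use df KB h sq in auto)
    finally show "\<bar>f1 (r, \<theta> - s + q) * K (\<theta>, r) - f2 (r, \<theta> - s + q) * K (\<theta>, r)\<bar>
        \<le> \<delta> * B + 0 * exp (4 * M * (r - \<theta>))" by simp
  qed (use d0 B0 in auto)
  have p3: "\<bar>- (c1 x - c2 x) + (NI c1 K x - NI c2 K x)\<bar> \<le> \<delta> + \<delta> * B"
    if x: "x = s - q + 1 + \<tau>" "s + \<tau> < q" for x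
  proof -
    have x0: "0 \<le> x" "x < 1" using x sq tau by auto
    have "\<bar>NI c1 K x - NI c2 K x\<bar> \<le> (\<delta> * B) * (1 - x)"
      unfolding NI_diff[OF gd1(4) gd2(4) K K x0(1)]
    proof (rule int_const_bound)
      fix \<theta> assume th: "\<theta> \<in> {x..1}"
      have "\<bar>c1 \<theta> * K (x, \<theta>) - c2 \<theta> * K (x, \<theta>)\<bar> = \<bar>(c1 \<theta> - c2 \<theta>) * K (x, \<theta>)\<bar>"
        by (simp add: algebra_simps)
      also have "\<dots> \<le> \<delta> * B" by (rule abs_mult_le) (use dc KB th x0 in auto)
      finally show "\<bar>c1 \<theta> * K (x, \<theta>) - c2 \<theta> * K (x, \<theta>)\<bar> \<le> \<delta> * B" .
    qed (use x0 in auto)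
    also have "\<dots> \<le> \<delta> * B" using x0 d0 B0 by (simp add: mult_left_le)
    finally have "\<bar>NI c1 K x - NI c2 K x\<bar> \<le> \<delta> * B" .
    moreover have "\<bar>c1 x - c2 x\<bar> \<le> \<delta>" using dc x0 by auto
    ultimately show ?thesis by linarith
  qed
  have "Krhs \<tau> f1 c1 K s q - Krhs \<tau> f2 c2 K s q = - (F1 f1 s q - F1 f2 s q) + (V f1 K s q - V f2 K s q) +
      (if s + \<tau> < q then - (c1 (s - q + 1 + \<tau>) - c2 (s - q + 1 + \<tau>)) + (NI c1 K (s - q + 1 + \<tau>) - NI c2 K (s - q + 1 + \<tau>)) else 0)"
    unfolding Krhs_eq by (simp add: algebra_simps)
  also have "\<bar>\<dots>\<bar> \<le> 2 * \<delta> * (1 + B)"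
  proof (cases "s + \<tau> < q")
    case True
    then show ?thesis using p1 p2 p3[OF refl True] by (simp add: algebra_simps)
  next
    case False
    then show ?thesis using p1 p2 d0 B0 by (simp add: algebra_simps)
  qed
  finally show ?thesis .
qed


lemma tri_comb:
  fixes d u v a W e :: real
  assumes "d = u + v" "\<bar>u\<bar> \<le> W / 2 * e" "\<bar>v\<bar> \<le> a" "a * 1 \<le> a * e"
  shows "\<bar>d\<bar> \<le> (a + W / 2) * e"
proof -
  have "\<bar>d\<bar> \<le> \<bar>u\<bar> + \<bar>v\<bar>" using assms(1) abs_triangle_ineq by simp
  moreover have "(a + W / 2) * e = a * e + W / 2 * e" by (simp add: algebra_simps)
  ultimately show ?thesis using assms(2-4) by linarith
qed

lemma K_data_lip:
  assumes g1: "good M f1 c1" and g2: "good M f2 c2" and tau: "\<tau> \<ge> 0" and d0: "\<delta> \<ge> 0"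
    and df: "\<And>x. x \<in> T1 \<Longrightarrow> \<bar>f1 x - f2 x\<bar> \<le> \<delta>"
    and dc: "\<And>x. 0 \<le> x \<Longrightarrow> x \<le> 1 \<Longrightarrow> \<bar>c1 x - c2 x\<bar> \<le> \<delta>"
    and x: "x \<in> T1"
  shows "\<bar>Kop \<tau> f1 c1 x - Kop \<tau> f2 c2 x\<bar> \<le> (4 * (1 + BK M) * exp (4 * M)) * \<delta>"
proof -
  note gd1 = goodD[OF g1]
  define K1 where "K1 = Kop \<tau> f1 c1"
  define K2 where "K2 = Kop \<tau> f2 c2"
  have S1: "Sol \<tau> f1 c1 K1" unfolding K1_def by (rule Kop_Sol[OF g1 tau])
  have S2: "Sol \<tau> f2 c2 K2" unfolding K2_def by (rule Kop_Sol[OF g2 tau])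
  have K1c: "continuous_on T1 K1" and K2c: "continuous_on T1 K2" using S1 S2 by (auto simp: Sol_def)
  have KB1: "\<And>x. x \<in> T1 \<Longrightarrow> \<bar>K1 x\<bar> \<le> BK M" unfolding K1_def by (rule K_bound[OF g1 tau])
  have KB2: "\<And>x. x \<in> T1 \<Longrightarrow> \<bar>K2 x\<bar> \<le> BK M" unfolding K2_def by (rule K_bound[OF g2 tau])
  have BK0: "BK M \<ge> 0" using BK_nonneg[OF gd1(1)] .
  define a where "a = 2 * \<delta> * (1 + BK M)"
  have a0: "a \<ge> 0" using d0 BK0 by (simp add: a_def)
  have "\<bar>(\<lambda>x. K1 x - K2 x) x\<bar> \<le> 2 * a * exp (4 * M * (snd x - fst x))"
  proof (rule weighted[where A = T1 and B = "2 * BK M", OF _ a0 _ _ _ x])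
    show "0 \<le> 4 * M" using gd1 by simp
    show "\<And>x. x \<in> T1 \<Longrightarrow> fst x \<le> snd x" by (auto simp: T1_def)
    show "\<bar>K1 x - K2 x\<bar> \<le> 2 * BK M" if "x \<in> T1" for x
      using KB1[OF that] KB2[OF that] by linarith
    fix W :: real assume W: "W \<ge> 0" and h: "\<forall>x\<in>T1. \<bar>K1 x - K2 x\<bar> \<le> W * exp (4 * M * (snd x - fst x))"
    show "\<forall>x\<in>T1. \<bar>K1 x - K2 x\<bar> \<le> (a + W / 2) * exp (4 * M * (snd x - fst x))"
    proof
      fix y assume y: "y \<in> T1"
      obtain s q where e: "y = (s, q)" by (cases y)
      have sq: "(s, q) \<in> T1" using y e by simp
      have "K1 (s, q) - K2 (s, q) = (Krhs \<tau> f1 c1 K1 s q - Krhs \<tau> f1 c1 K2 s q) + (Krhs \<tau> f1 c1 K2 s q - Krhs \<tau> f2 c2 K2 s q)"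
        using S1 S2 sq by (simp add: Sol_def)
      moreover have "\<bar>Krhs \<tau> f1 c1 K1 s q - Krhs \<tau> f1 c1 K2 s q\<bar> \<le> W / 2 * exp (4 * M * (q - s))"
        by (rule CS[OF g1 tau K1c K2c W h sq])
      moreover have "\<bar>Krhs \<tau> f1 c1 K2 s q - Krhs \<tau> f2 c2 K2 s q\<bar> \<le> a"
        unfolding a_def by (rule FB[OF g1 g2 K2c KB2 BK0 d0 df dc tau sq])
      moreover have "a * 1 \<le> a * exp (4 * M * (q - s))"
        using exp_ge1[OF gd1(1) sq] a0 by (intro mult_left_mono) auto
      ultimately have "\<bar>K1 (s, q) - K2 (s, q)\<bar> \<le> (a + W / 2) * exp (4 * M * (q - s))"
        by (rule tri_comb)
      then show "\<bar>K1 y - K2 y\<bar> \<le> (a + W / 2) * exp (4 * M * (snd y - fst y))" using e by simp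
    qed
  qed
  also have "\<dots> \<le> 2 * a * exp (4 * M)"
    using exp_le[OF gd1(1) x] a0 by (intro mult_left_mono) auto
  finally show ?thesis by (simp add: K1_def K2_def a_def mult_ac)
qed

lemma K_tau_lip:
  assumes g: "good M f c" and lp: "lipfc M f c" and t1: "\<tau>1 \<ge> 0" and t2: "\<tau>2 \<ge> 0"
    and x: "x \<in> T1"
  shows "\<bar>Kop \<tau>1 f c x - Kop \<tau>2 f c x\<bar> \<le> (2 * CN M * exp (4 * M)) * \<bar>\<tau>1 - \<tau>2\<bar>"
proof -
  note gd = goodD[OF g]
  define K1 where "K1 = Kop \<tau>1 f c"
  define K2 where "K2 = Kop \<tau>2 f c"
  have S1: "Sol \<tau>1 f c K1" unfolding K1_def by (rule Kop_Sol[OF g t1])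
  have S2: "Sol \<tau>2 f c K2" unfolding K2_def by (rule Kop_Sol[OF g t2])
  have K1c: "continuous_on T1 K1" and K2c: "continuous_on T1 K2" using S1 S2 by (auto simp: Sol_def)
  have KB1: "\<And>x. x \<in> T1 \<Longrightarrow> \<bar>K1 x\<bar> \<le> BK M" unfolding K1_def by (rule K_bound[OF g t1])
  have KB2: "\<And>x. x \<in> T1 \<Longrightarrow> \<bar>K2 x\<bar> \<le> BK M" unfolding K2_def by (rule K_bound[OF g t2])
  have CN0: "CN M \<ge> 0" using gd(1) BK_nonneg[OF gd(1)] LS_nonneg[OF gd(1)] by (simp add: CN_def)
  define a where "a = CN M * \<bar>\<tau>1 - \<tau>2\<bar>"
  have a0: "a \<ge> 0" using CN0 by (simp add: a_def)
  have "\<bar>(\<lambda>x. K1 x - K2 x) x\<bar> \<le> 2 * a * exp (4 * M * (snd x - fst x))"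
  proof (rule weighted[where A = T1 and B = "2 * BK M", OF _ a0 _ _ _ x])
    show "0 \<le> 4 * M" using gd by simp
    show "\<And>x. x \<in> T1 \<Longrightarrow> fst x \<le> snd x" by (auto simp: T1_def)
    show "\<bar>K1 x - K2 x\<bar> \<le> 2 * BK M" if "x \<in> T1" for x
      using KB1[OF that] KB2[OF that] by linarith
    fix W :: real assume W: "W \<ge> 0" and h: "\<forall>x\<in>T1. \<bar>K1 x - K2 x\<bar> \<le> W * exp (4 * M * (snd x - fst x))"
    show "\<forall>x\<in>T1. \<bar>K1 x - K2 x\<bar> \<le> (a + W / 2) * exp (4 * M * (snd x - fst x))"
    proof
      fix y assume y: "y \<in> T1"
      obtain s q where e: "y = (s, q)" by (cases y)
      have sq: "(s, q) \<in> T1" using y e by simp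
      have "K1 (s, q) - K2 (s, q) = (Krhs \<tau>1 f c K1 s q - Krhs \<tau>1 f c K2 s q) + (Krhs \<tau>1 f c K2 s q - Krhs \<tau>2 f c K2 s q)"
        using S1 S2 sq by (simp add: Sol_def)
      moreover have "\<bar>Krhs \<tau>1 f c K1 s q - Krhs \<tau>1 f c K2 s q\<bar> \<le> W / 2 * exp (4 * M * (q - s))"
        by (rule CS[OF g t1 K1c K2c W h sq])
      moreover have "\<bar>Krhs \<tau>1 f c K2 s q - Krhs \<tau>2 f c K2 s q\<bar> \<le> a"
      proof -
        have "Krhs \<tau>1 f c K2 s q - Krhs \<tau>2 f c K2 s q = Nf c K2 (s - q + 1 + \<tau>1) - Nf c K2 (s - q + 1 + \<tau>2)"
          unfolding Krhs_Nf[where c = c and f = f and K = K2, OF sq t1 gd(6)] Krhs_Nf[where c = c and f = f and K = K2, OF sq t2 gd(6)]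
          by simp
        also have "\<bar>\<dots>\<bar> \<le> CN M * \<bar>(s - q + 1 + \<tau>1) - (s - q + 1 + \<tau>2)\<bar>"
          unfolding K2_def by (rule Nf_lip[OF g lp t2]) (use sq t1 t2 in auto)
        finally show ?thesis by (simp add: a_def)
      qed
      moreover have "a * 1 \<le> a * exp (4 * M * (q - s))"
        using exp_ge1[OF gd(1) sq] a0 by (intro mult_left_mono) auto
      ultimately have "\<bar>K1 (s, q) - K2 (s, q)\<bar> \<le> (a + W / 2) * exp (4 * M * (q - s))"
        by (rule tri_comb)
      then show "\<bar>K1 y - K2 y\<bar> \<le> (a + W / 2) * exp (4 * M * (snd y - fst y))" using e by simp
    qed
  qed
  also have "\<dots> \<le> 2 * a * exp (4 * M)"
    using exp_le[OF gd(1) x] a0 by (intro mult_left_mono) auto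
  finally show ?thesis by (simp add: K1_def K2_def a_def mult_ac)
qed


lemma ne_imp_nonempty_dummy: "x \<in> A \<Longrightarrow> A \<noteq> {}" by auto

lemma supn_ge:
  assumes "\<And>x. x \<in> A \<Longrightarrow> \<bar>g x\<bar> \<le> B" "x \<in> A"
  shows "\<bar>g x\<bar> \<le> supn A g"
  unfolding supn_def
  by (rule cSup_upper) (use assms in \<open>auto intro!: bdd_aboveI[where M = B]\<close>)

lemma supn_le:
  assumes "A \<noteq> {}" "\<And>x. x \<in> A \<Longrightarrow> \<bar>g x\<bar> \<le> C"
  shows "supn A g \<le> C"
  unfolding supn_def by (rule cSup_least) (use assms in auto)

lemma J_diff:
  assumes g1: "good M f1 c1" and g2: "good M f2 c2" and t1: "\<tau>1 \<ge> 0" and t2: "\<tau>2 \<ge> 0"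
    and KD: "\<And>x. x \<in> T1 \<Longrightarrow> \<bar>Kop \<tau>1 f1 c1 x - Kop \<tau>2 f2 c2 x\<bar> \<le> E"
    and d0: "\<delta> \<ge> 0" and dc: "\<And>x. 0 \<le> x \<Longrightarrow> x \<le> 1 \<Longrightarrow> \<bar>c1 x - c2 x\<bar> \<le> \<delta>"
    and s0: "\<sigma> \<ge> 0"
  shows "\<bar>Jop \<tau>1 f1 c1 \<sigma> - Jop \<tau>2 f2 c2 \<sigma>\<bar> \<le> \<delta> + M * E + BK M * \<delta>"
proof -
  note gd1 = goodD[OF g1] and gd2 = goodD[OF g2]
  define K1 where "K1 = Kop \<tau>1 f1 c1"
  define K2 where "K2 = Kop \<tau>2 f2 c2"
  have K1c: "continuous_on T1 K1" unfolding K1_def using Kop_Sol[OF g1 t1] by (simp add: Sol_def)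
  have K2c: "continuous_on T1 K2" unfolding K2_def using Kop_Sol[OF g2 t2] by (simp add: Sol_def)
  have KB2: "\<And>x. x \<in> T1 \<Longrightarrow> \<bar>K2 x\<bar> \<le> BK M" unfolding K2_def by (rule K_bound[OF g2 t2])
  have BK0: "BK M \<ge> 0" using BK_nonneg[OF gd1(1)] .
  have E0: "E \<ge> 0" using KD[of "(0,0)"] by simp
  show ?thesis
  proof (cases "\<sigma> < 1")
    case True
    have "Jop \<tau>1 f1 c1 \<sigma> - Jop \<tau>2 f2 c2 \<sigma> = - (c1 \<sigma> - c2 \<sigma>) + (NI c1 K1 \<sigma> - NI c2 K2 \<sigma>)"
      unfolding Jop_Nf[OF s0] K1_def[symmetric] K2_def[symmetric] using True by (simp add: Nf_def)
    also have "\<dots> = - (c1 \<sigma> - c2 \<sigma>) + integral {\<sigma>..1} (\<lambda>\<theta>. c1 \<theta> * K1 (\<sigma>, \<theta>) - c2 \<theta> * K2 (\<sigma>, \<theta>))"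
      by (simp add: NI_diff[OF gd1(4) gd2(4) K1c K2c s0])
    finally have e: "Jop \<tau>1 f1 c1 \<sigma> - Jop \<tau>2 f2 c2 \<sigma> = - (c1 \<sigma> - c2 \<sigma>) + integral {\<sigma>..1} (\<lambda>\<theta>. c1 \<theta> * K1 (\<sigma>, \<theta>) - c2 \<theta> * K2 (\<sigma>, \<theta>))" .
    have b: "\<bar>integral {\<sigma>..1} (\<lambda>\<theta>. c1 \<theta> * K1 (\<sigma>, \<theta>) - c2 \<theta> * K2 (\<sigma>, \<theta>))\<bar> \<le> (M * E + \<delta> * BK M) * (1 - \<sigma>)"
    proof (rule int_const_bound)
      fix \<theta> assume th: "\<theta> \<in> {\<sigma>..1}"
      have "c1 \<theta> * K1 (\<sigma>, \<theta>) - c2 \<theta> * K2 (\<sigma>, \<theta>) = c1 \<theta> * (K1 (\<sigma>, \<theta>) - K2 (\<sigma>, \<theta>)) + (c1 \<theta> - c2 \<theta>) * K2 (\<sigma>, \<theta>)"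
        by (simp add: algebra_simps)
      moreover have "\<bar>c1 \<theta> * (K1 (\<sigma>, \<theta>) - K2 (\<sigma>, \<theta>))\<bar> \<le> M * E"
        by (rule abs_mult_le) (use gd1(5) KD th s0 in \<open>auto simp: K1_def K2_def\<close>)
      moreover have "\<bar>(c1 \<theta> - c2 \<theta>) * K2 (\<sigma>, \<theta>)\<bar> \<le> \<delta> * BK M"
        by (rule abs_mult_le) (use dc KB2 th s0 in auto)
      moreover have "\<bar>c1 \<theta> * (K1 (\<sigma>, \<theta>) - K2 (\<sigma>, \<theta>)) + (c1 \<theta> - c2 \<theta>) * K2 (\<sigma>, \<theta>)\<bar>
          \<le> \<bar>c1 \<theta> * (K1 (\<sigma>, \<theta>) - K2 (\<sigma>, \<theta>))\<bar> + \<bar>(c1 \<theta> - c2 \<theta>) * K2 (\<sigma>, \<theta>)\<bar>"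
        by (rule abs_triangle_ineq)
      ultimately show "\<bar>c1 \<theta> * K1 (\<sigma>, \<theta>) - c2 \<theta> * K2 (\<sigma>, \<theta>)\<bar> \<le> M * E + \<delta> * BK M"
        by linarith
    qed (use True in auto)
    also have "\<dots> \<le> M * E + \<delta> * BK M"
      using True s0 gd1(1) E0 d0 BK0 by (intro mult_left_le) auto
    finally have b': "\<bar>integral {\<sigma>..1} (\<lambda>\<theta>. c1 \<theta> * K1 (\<sigma>, \<theta>) - c2 \<theta> * K2 (\<sigma>, \<theta>))\<bar> \<le> M * E + \<delta> * BK M" .
    have "\<bar>c1 \<sigma> - c2 \<sigma>\<bar> \<le> \<delta>" using dc s0 True by auto
    then show ?thesis unfolding e using b' by (simp add: algebra_simps)
  next
    case False
    then show ?thesis using d0 gd1(1) E0 BK0 by (simp add: Jop_def)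
  qed
qed

theorem lemma1:
  fixes \<tau>bar M :: real
  assumes "\<tau>bar > 0" and "M > 0"
  shows "\<exists>LK LJ LL. LK > 0 \<and> LJ > 0 \<and> LL > 0 \<and>
    (\<forall>\<tau>1 \<tau>2 \<eta>1 \<eta>2 f1 f2 c1 c2.
       \<tau>1 \<in> {0<..\<tau>bar} \<and> \<tau>2 \<in> {0<..\<tau>bar} \<and> \<eta>1 \<in> {0<..<\<tau>1} \<and> \<eta>2 \<in> {0<..<\<tau>2} \<and>
       C1_T1_bounded f1 M \<and> C1_T1_bounded f2 M \<and>
       Cunder_bounded c1 M \<and> Cunder_bounded c2 M \<longrightarrow>
       supn T1 (\<lambda>x. Kop \<tau>1 f1 c1 x - Kop \<tau>2 f2 c2 x)
         \<le> LK * Max {\<bar>\<tau>1 - \<tau>2\<bar>, supn T1 (\<lambda>x. f1 x - f2 x), supn {0..1} (\<lambda>x. c1 x - c2 x)} \<and>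
       supn {0..1} (\<lambda>x. Lop \<tau>1 \<eta>1 f1 c1 x - Lop \<tau>2 \<eta>2 f2 c2 x)
         \<le> LL * Max {\<bar>\<tau>1 - \<tau>2\<bar>, \<bar>\<eta>1 - \<eta>2\<bar>, supn T1 (\<lambda>x. f1 x - f2 x),
                     supn {0..1} (\<lambda>x. c1 x - c2 x)} \<and>
       supn {0..1} (\<lambda>x. Jop \<tau>1 f1 c1 x - Jop \<tau>2 f2 c2 x)
         \<le> LJ * Max {\<bar>\<tau>1 - \<tau>2\<bar>, supn T1 (\<lambda>x. f1 x - f2 x), supn {0..1} (\<lambda>x. c1 x - c2 x)})"
proof -
  define E4 where "E4 = exp (4 * M)"
  define LK where "LK = 4 * (1 + BK M) * E4 + 2 * CN M * E4 + 1"
  define LJ where "LJ = 1 + M * LK + BK M"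
  define LL where "LL = LJ + CN M"
  have BK0: "BK M \<ge> 0" using BK_nonneg[OF assms(2)] .
  have CN0: "CN M \<ge> 0" using assms(2) BK0 LS_nonneg[OF assms(2)] by (simp add: CN_def)
  have E40: "E4 > 0" by (simp add: E4_def)
  have LK0: "LK > 0" using BK0 CN0 E40 by (simp add: LK_def add_pos_nonneg)
  have LJ0: "LJ > 0" using LK0 BK0 assms(2) by (simp add: LJ_def add_pos_nonneg)
  have LL0: "LL > 0" using LJ0 CN0 by (simp add: LL_def)
  show ?thesis
  proof (rule exI[of _ LK], rule exI[of _ LJ], rule exI[of _ LL], intro conjI LK0 LJ0 LL0 allI impI)
    fix \<tau>1 \<tau>2 \<eta>1 \<eta>2 f1 f2 c1 c2
    assume H: "\<tau>1 \<in> {0<..\<tau>bar} \<and> \<tau>2 \<in> {0<..\<tau>bar} \<and> \<eta>1 \<in> {0<..<\<tau>1} \<and> \<eta>2 \<in> {0<..<\<tau>2} \<and>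
       C1_T1_bounded f1 M \<and> C1_T1_bounded f2 M \<and> Cunder_bounded c1 M \<and> Cunder_bounded c2 M"
    have t1: "\<tau>1 \<ge> 0" and t2: "\<tau>2 \<ge> 0" and e1: "\<eta>1 \<ge> 0" and e2: "\<eta>2 \<ge> 0" using H by auto
    have g1: "good M f1 c1" using good_intro[of f1 M c1] H assms(2) by blast
    have g2: "good M f2 c2" using good_intro[of f2 M c2] H assms(2) by blast
    have lp2: "lipfc M f2 c2" using H lipfc_intro[of f2 M c2] by blast
    note gd1 = goodD[OF g1] and gd2 = goodD[OF g2]
    define df where "df = supn T1 (\<lambda>x. f1 x - f2 x)"
    define dc where "dc = supn {0..1} (\<lambda>x. c1 x - c2 x)"
    have dfx: "\<bar>f1 x - f2 x\<bar> \<le> df" if "x \<in> T1" for x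
      unfolding df_def
    proof (rule supn_ge[OF _ that, where B = "2 * M"])
      fix y assume y: "y \<in> T1"
      have "\<bar>f1 y\<bar> \<le> M" "\<bar>f2 y\<bar> \<le> M" using gd1(3)[OF y] gd2(3)[OF y] by auto
      then show "\<bar>f1 y - f2 y\<bar> \<le> 2 * M" by linarith
    qed
    have dcx: "\<bar>c1 x - c2 x\<bar> \<le> dc" if "0 \<le> x" "x \<le> 1" for x
      unfolding dc_def
    proof (rule supn_ge[where B = "2 * M"])
      fix y assume y: "y \<in> {0..1::real}"
      have "\<bar>c1 y\<bar> \<le> M" "\<bar>c2 y\<bar> \<le> M" using gd1(5)[of y] gd2(5)[of y] y by auto
      then show "\<bar>c1 y - c2 y\<bar> \<le> 2 * M" by linarith
    qed (use that in auto)
    define \<delta> where "\<delta> = Max {\<bar>\<tau>1 - \<tau>2\<bar>, df, dc}"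
    define \<delta>' where "\<delta>' = Max {\<bar>\<tau>1 - \<tau>2\<bar>, \<bar>\<eta>1 - \<eta>2\<bar>, df, dc}"
    have dl: "\<bar>\<tau>1 - \<tau>2\<bar> \<le> \<delta>" "df \<le> \<delta>" "dc \<le> \<delta>" unfolding \<delta>_def by (rule Max_ge; simp)+
    have dl': "\<delta> \<le> \<delta>'" "\<bar>\<eta>1 - \<eta>2\<bar> \<le> \<delta>'" unfolding \<delta>_def \<delta>'_def
      by (rule Max_mono; auto) (rule Max_ge; simp)
    have d0: "\<delta> \<ge> 0" using dl(1) by linarith
    have dfd: "\<bar>f1 x - f2 x\<bar> \<le> \<delta>" if "x \<in> T1" for x using dfx[OF that] dl by linarith
    have dcd: "\<bar>c1 x - c2 x\<bar> \<le> \<delta>" if "0 \<le> x" "x \<le> 1" for x using dcx[OF that] dl by linarith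
    have KD: "\<bar>Kop \<tau>1 f1 c1 x - Kop \<tau>2 f2 c2 x\<bar> \<le> LK * \<delta>" if x: "x \<in> T1" for x
    proof -
      have a: "\<bar>Kop \<tau>1 f1 c1 x - Kop \<tau>1 f2 c2 x\<bar> \<le> (4 * (1 + BK M) * exp (4 * M)) * \<delta>"
        by (rule K_data_lip[OF g1 g2 t1 d0 dfd dcd x])
      have b: "\<bar>Kop \<tau>1 f2 c2 x - Kop \<tau>2 f2 c2 x\<bar> \<le> (2 * CN M * exp (4 * M)) * \<bar>\<tau>1 - \<tau>2\<bar>"
        by (rule K_tau_lip[OF g2 lp2 t1 t2 x])
      have b': "(2 * CN M * exp (4 * M)) * \<bar>\<tau>1 - \<tau>2\<bar> \<le> (2 * CN M * exp (4 * M)) * \<delta>"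
        using dl(1) CN0 by (intro mult_left_mono) auto
      have "\<bar>Kop \<tau>1 f1 c1 x - Kop \<tau>2 f2 c2 x\<bar> \<le> (4 * (1 + BK M) * exp (4 * M)) * \<delta> + (2 * CN M * exp (4 * M)) * \<delta>"
        using a b b' by linarith
      also have "\<dots> \<le> LK * \<delta>" using d0 by (simp add: LK_def E4_def algebra_simps)
      finally show ?thesis .
    qed
    have JD: "\<bar>Jop \<tau>1 f1 c1 \<sigma> - Jop \<tau>2 f2 c2 \<sigma>\<bar> \<le> LJ * \<delta>" if s0: "\<sigma> \<ge> 0" for \<sigma>
    proof -
      have "\<bar>Jop \<tau>1 f1 c1 \<sigma> - Jop \<tau>2 f2 c2 \<sigma>\<bar> \<le> \<delta> + M * (LK * \<delta>) + BK M * \<delta>"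
        by (rule J_diff[OF g1 g2 t1 t2 KD d0 dcd s0])
      also have "\<dots> = LJ * \<delta>" by (simp add: LJ_def algebra_simps)
      finally show ?thesis .
    qed
    have z: "(0::real, 0::real) \<in> T1" by simp
    have ne1: "T1 \<noteq> {}" using z by (rule ne_imp_nonempty_dummy)
    have ne2: "{0..1::real} \<noteq> {}" by simp
    note nonempty = ne1 ne2
    show "supn T1 (\<lambda>x. Kop \<tau>1 f1 c1 x - Kop \<tau>2 f2 c2 x) \<le> LK * Max {\<bar>\<tau>1 - \<tau>2\<bar>, supn T1 (\<lambda>x. f1 x - f2 x), supn {0..1} (\<lambda>x. c1 x - c2 x)}"
      using supn_le[OF nonempty(1) KD] by (simp add: \<delta>_def df_def dc_def)
    show "supn {0..1} (\<lambda>x. Jop \<tau>1 f1 c1 x - Jop \<tau>2 f2 c2 x) \<le> LJ * Max {\<bar>\<tau>1 - \<tau>2\<bar>, supn T1 (\<lambda>x. f1 x - f2 x), supn {0..1} (\<lambda>x. c1 x - c2 x)}"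
      using supn_le[OF nonempty(2), of "\<lambda>x. Jop \<tau>1 f1 c1 x - Jop \<tau>2 f2 c2 x" "LJ * \<delta>"] JD
      by (simp add: \<delta>_def df_def dc_def)
    have LD: "\<bar>Lop \<tau>1 \<eta>1 f1 c1 \<phi> - Lop \<tau>2 \<eta>2 f2 c2 \<phi>\<bar> \<le> LL * \<delta>'" if p: "\<phi> \<in> {0..1}" for \<phi>
    proof (cases "\<phi> < 1")
      case True
      have p0: "0 \<le> \<phi> + \<eta>1" "0 \<le> \<phi> + \<eta>2" using p e1 e2 by auto
      have "Lop \<tau>1 \<eta>1 f1 c1 \<phi> - Lop \<tau>2 \<eta>2 f2 c2 \<phi> = (Jop \<tau>1 f1 c1 (\<phi> + \<eta>1) - Jop \<tau>2 f2 c2 (\<phi> + \<eta>1)) +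
          (Nf c2 (Kop \<tau>2 f2 c2) (\<phi> + \<eta>1) - Nf c2 (Kop \<tau>2 f2 c2) (\<phi> + \<eta>2))"
        using True by (simp add: Lop_def Jop_Nf[OF p0(1)] Jop_Nf[OF p0(2)])
      moreover have "\<bar>Jop \<tau>1 f1 c1 (\<phi> + \<eta>1) - Jop \<tau>2 f2 c2 (\<phi> + \<eta>1)\<bar> \<le> LJ * \<delta>" by (rule JD[OF p0(1)])
      moreover have "\<bar>Nf c2 (Kop \<tau>2 f2 c2) (\<phi> + \<eta>1) - Nf c2 (Kop \<tau>2 f2 c2) (\<phi> + \<eta>2)\<bar> \<le> CN M * \<bar>(\<phi> + \<eta>1) - (\<phi> + \<eta>2)\<bar>"
        by (rule Nf_lip[OF g2 lp2 t2 p0(2) p0(1)])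
      moreover have "LJ * \<delta> \<le> LJ * \<delta>'" using dl' LJ0 by (intro mult_left_mono) auto
      moreover have "CN M * \<bar>(\<phi> + \<eta>1) - (\<phi> + \<eta>2)\<bar> \<le> CN M * \<delta>'" using dl' CN0 by (intro mult_left_mono) auto
      moreover have "LL * \<delta>' = LJ * \<delta>' + CN M * \<delta>'" by (simp add: LL_def algebra_simps)
      moreover have "\<bar>(Jop \<tau>1 f1 c1 (\<phi> + \<eta>1) - Jop \<tau>2 f2 c2 (\<phi> + \<eta>1)) +
          (Nf c2 (Kop \<tau>2 f2 c2) (\<phi> + \<eta>1) - Nf c2 (Kop \<tau>2 f2 c2) (\<phi> + \<eta>2))\<bar> \<le>
          \<bar>Jop \<tau>1 f1 c1 (\<phi> + \<eta>1) - Jop \<tau>2 f2 c2 (\<phi> + \<eta>1)\<bar> + \<bar>Nf c2 (Kop \<tau>2 f2 c2) (\<phi> + \<eta>1) - Nf c2 (Kop \<tau>2 f2 c2) (\<phi> + \<eta>2)\<bar>"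
        by (rule abs_triangle_ineq)
      ultimately show ?thesis by linarith
    next
      case False
      have "0 \<le> LL * \<delta>'" using LL0 dl' d0 by simp
      then show ?thesis using False by (simp add: Lop_def)
    qed
    show "supn {0..1} (\<lambda>x. Lop \<tau>1 \<eta>1 f1 c1 x - Lop \<tau>2 \<eta>2 f2 c2 x) \<le> LL * Max {\<bar>\<tau>1 - \<tau>2\<bar>, \<bar>\<eta>1 - \<eta>2\<bar>, supn T1 (\<lambda>x. f1 x - f2 x), supn {0..1} (\<lambda>x. c1 x - c2 x)}"
      using supn_le[OF nonempty(2), of "\<lambda>x. Lop \<tau>1 \<eta>1 f1 c1 x - Lop \<tau>2 \<eta>2 f2 c2 x" "LL * \<delta>'"] LD
      by (simp add: \<delta>'_def df_def dc_def)
  qed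
qed


end
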